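(* Let $\Gamma$ be a metrized graph with $v \geq 4$ vertices. Then $$(v-4)\,Kf(\Gamma)=\sum_{e_i \in E(\Gamma)} \frac{R_i}{L_i+R_i}\, Kf(\overline{\Gamma}_i) - v\cdot y(\Gamma).$$
   Context: A metrized graph $\Gamma$ is a finite connected graph (multiple edges and self-loops allowed) each of whose edges is identified with a closed segment of positive length. Its vertex set $V(\Gamma)$ is a finite nonempty set of points containing every point whose valence (number of directions emanating from it) is not $2$; $v=\#V(\Gamma)$; $E(\Gamma)$ is the set of edges (closed segments between vertices), and $L_i$ is the length of the edge $e_i$. $r(x,y)$ is the effective resistance on $\Gamma$ (each edge a resistor with resistance equal to its length), and $r_\beta$ is the resistance function on a metrized graph $\beta$. For an edge $e_i$ with end points $p_i,q_i$, $\Gamma-e_i$ is the graph with the interior of $e_i$ deleted. If $\Gamma-e_i$ is connected, $R_i$ is the effective resistance between $p_i$ and $q_i$ in $\Gamma-e_i$, and for a point $p$, $R_{a_i,p}=\hat j_{p_i}(p,q_i)$ and $R_{b_i,p}=\hat j_{q_i}(p,p_i)$, where $\hat j_z(x,y)$ is the voltage function of $\Gamma-e_i$ (the potential at $x$ when unit current enters at $y$ and exits at $z$, with potential $0$ at $z$); thus $R_{a_i,p}+R_{b_i,p}=R_i$. If $e_i$ is a bridge, one sets $R_{a_i,p}=0,\ R_{b_i,p}=R_i$ when $p$ lies in the component of $\Gamma-e_i$ containing $p_i$, and $R_{a_i,p}=R_i,\ R_{b_i,p}=0$ otherwise, and every expression involving $R_i$ is interpreted as its limit as $R_i\to\infty$.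 For a self-loop, $R_i=0$. The Kirchhoff index is $Kf(\Gamma)=\frac12\sum_{p,q\in V(\Gamma)} r(p,q)$. $\overline{\Gamma}_i$ is the metrized graph obtained by contracting $e_i$ to a point (identifying $p_i$ and $q_i$), with vertex set the image of $V(\Gamma)$; the quantities for $\overline\Gamma_i$ are computed in $\overline\Gamma_i$. For a fixed vertex $p$ (the value is independent of the choice), $$y(\Gamma)=\frac14\sum_{e_i\in E(\Gamma)}\frac{L_iR_i^2}{(L_i+R_i)^2}+\frac34\sum_{e_i\in E(\Gamma)}\frac{L_i(R_{a_i,p}-R_{b_i,p})^2}{(L_i+R_i)^2}.$$ *)

theory Defs
  imports Complex_Main
begin

text \<open>A metrized graph (with a chosen vertex set) is modelled combinatorially:
  a vertex set V, an edge set E, endpoints ends e = (p_e, q_e), and lengths L e > 0.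
  Multiple edges and self-loops are allowed.  All interior points of edges have
  valence 2, so any vertex set is admissible.\<close>

definition graph_connected :: "'v set \<Rightarrow> 'e set \<Rightarrow> ('e \<Rightarrow> 'v \<times> 'v) \<Rightarrow> bool" where
  "graph_connected V E ends \<longleftrightarrow>
     (\<forall>x\<in>V. \<forall>y\<in>V. (x, y) \<in> (\<Union>e\<in>E. {ends e, prod.swap (ends e)})\<^sup>*)"

definition metrized_graph :: "'v set \<Rightarrow> 'e set \<Rightarrow> ('e \<Rightarrow> 'v \<times> 'v) \<Rightarrow> ('e \<Rightarrow> real) \<Rightarrow> bool" where
  "metrized_graph V E ends L \<longleftrightarrow>
     finite V \<and> V \<noteq> {} \<and> finite E \<and>
     (\<forall>e\<in>E. fst (ends e) \<in> V \<and> snd (ends e) \<in> V \<and> L e > 0) \<and>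
     graph_connected V E ends"

text \<open>Net current leaving vertex u through the edges, for the potential f
  (each edge is a resistor of resistance L e).\<close>
definition net_current :: "'e set \<Rightarrow> ('e \<Rightarrow> 'v \<times> 'v) \<Rightarrow> ('e \<Rightarrow> real) \<Rightarrow> ('v \<Rightarrow> real) \<Rightarrow> 'v \<Rightarrow> real" where
  "net_current E ends L f u =
     (\<Sum>e\<in>{e\<in>E. fst (ends e) = u}. (f u - f (snd (ends e))) / L e) +
     (\<Sum>e\<in>{e\<in>E. snd (ends e) = u}. (f u - f (fst (ends e))) / L e)"

text \<open>Voltage function: voltage V E ends L z y x = j_z(x,y), the potential at x when
  unit current enters at y and exits at z, with potential 0 at z.\<close>
definition voltage :: "'v set \<Rightarrow> 'e set \<Rightarrow> ('e \<Rightarrow> 'v \<times> 'v) \<Rightarrow> ('e \<Rightarrow> real) \<Rightarrow> 'v \<Rightarrow> 'v \<Rightarrow> 'v \<Rightarrow> real" where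
  "voltage V E ends L z y =
     (THE f. (\<forall>u\<in>V. net_current E ends L f u = (if u = y then 1 else 0) - (if u = z then 1 else 0))
             \<and> f z = 0 \<and> (\<forall>u. u \<notin> V \<longrightarrow> f u = 0))"

definition eff_res :: "'v set \<Rightarrow> 'e set \<Rightarrow> ('e \<Rightarrow> 'v \<times> 'v) \<Rightarrow> ('e \<Rightarrow> real) \<Rightarrow> 'v \<Rightarrow> 'v \<Rightarrow> real" where
  "eff_res V E ends L x y = voltage V E ends L y x x"

definition kirchhoff_index :: "'v set \<Rightarrow> 'e set \<Rightarrow> ('e \<Rightarrow> 'v \<times> 'v) \<Rightarrow> ('e \<Rightarrow> real) \<Rightarrow> real" where
  "kirchhoff_index V E ends L = (1/2) * (\<Sum>p\<in>V. \<Sum>q\<in>V. eff_res V E ends L p q)"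

definition is_bridge :: "'v set \<Rightarrow> 'e set \<Rightarrow> ('e \<Rightarrow> 'v \<times> 'v) \<Rightarrow> 'e \<Rightarrow> bool" where
  "is_bridge V E ends i \<longleftrightarrow> i \<in> E \<and> \<not> graph_connected V (E - {i}) ends"

text \<open>R_i, R_{a_i,p}, R_{b_i,p} computed in Gamma - e_i (meaningful when e_i is not a bridge).\<close>
definition R_del :: "'v set \<Rightarrow> 'e set \<Rightarrow> ('e \<Rightarrow> 'v \<times> 'v) \<Rightarrow> ('e \<Rightarrow> real) \<Rightarrow> 'e \<Rightarrow> real" where
  "R_del V E ends L i = eff_res V (E - {i}) ends L (fst (ends i)) (snd (ends i))"

definition R_a :: "'v set \<Rightarrow> 'e set \<Rightarrow> ('e \<Rightarrow> 'v \<times> 'v) \<Rightarrow> ('e \<Rightarrow> real) \<Rightarrow> 'e \<Rightarrow> 'v \<Rightarrow> real" where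
  "R_a V E ends L i p = voltage V (E - {i}) ends L (fst (ends i)) (snd (ends i)) p"

definition R_b :: "'v set \<Rightarrow> 'e set \<Rightarrow> ('e \<Rightarrow> 'v \<times> 'v) \<Rightarrow> ('e \<Rightarrow> real) \<Rightarrow> 'e \<Rightarrow> 'v \<Rightarrow> real" where
  "R_b V E ends L i p = voltage V (E - {i}) ends L (snd (ends i)) (fst (ends i)) p"

text \<open>Per-edge terms; for a bridge they are the limits as R_i tends to infinity
  (with R_{a_i,p}, R_{b_i,p} equal to 0 and R_i in some order): all limits equal the stated values.\<close>
definition contr_coef :: "'v set \<Rightarrow> 'e set \<Rightarrow> ('e \<Rightarrow> 'v \<times> 'v) \<Rightarrow> ('e \<Rightarrow> real) \<Rightarrow> 'e \<Rightarrow> real" where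
  "contr_coef V E ends L i =
     (if is_bridge V E ends i then 1
      else R_del V E ends L i / (L i + R_del V E ends L i))"

definition y_term1 :: "'v set \<Rightarrow> 'e set \<Rightarrow> ('e \<Rightarrow> 'v \<times> 'v) \<Rightarrow> ('e \<Rightarrow> real) \<Rightarrow> 'e \<Rightarrow> real" where
  "y_term1 V E ends L i =
     (if is_bridge V E ends i then L i
      else L i * (R_del V E ends L i)\<^sup>2 / (L i + R_del V E ends L i)\<^sup>2)"

definition y_term2 :: "'v set \<Rightarrow> 'e set \<Rightarrow> ('e \<Rightarrow> 'v \<times> 'v) \<Rightarrow> ('e \<Rightarrow> real) \<Rightarrow> 'e \<Rightarrow> 'v \<Rightarrow> real" where
  "y_term2 V E ends L i p =
     (if is_bridge V E ends i then L i
      else L i * (R_a V E ends L i p - R_b V E ends L i p)\<^sup>2 / (L i + R_del V E ends L i)\<^sup>2)"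

definition y_inv :: "'v set \<Rightarrow> 'e set \<Rightarrow> ('e \<Rightarrow> 'v \<times> 'v) \<Rightarrow> ('e \<Rightarrow> real) \<Rightarrow> 'v \<Rightarrow> real" where
  "y_inv V E ends L p =
     (1/4) * (\<Sum>i\<in>E. y_term1 V E ends L i) + (3/4) * (\<Sum>i\<in>E. y_term2 V E ends L i p)"

definition contract_map :: "('e \<Rightarrow> 'v \<times> 'v) \<Rightarrow> 'e \<Rightarrow> 'v \<Rightarrow> 'v" where
  "contract_map ends i x = (if x = snd (ends i) then fst (ends i) else x)"

definition kf_contracted :: "'v set \<Rightarrow> 'e set \<Rightarrow> ('e \<Rightarrow> 'v \<times> 'v) \<Rightarrow> ('e \<Rightarrow> real) \<Rightarrow> 'e \<Rightarrow> real" where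
  "kf_contracted V E ends L i =
     kirchhoff_index (contract_map ends i ` V) (E - {i})
       (\<lambda>e. map_prod (contract_map ends i) (contract_map ends i) (ends e)) L"

end

theory Submission
  imports Defs "Jordan_Normal_Form.Determinant"
begin

lemma LA_solve:
  fixes M :: "'v \<Rightarrow> 'v \<Rightarrow> real" and V :: "'v set"
  assumes fin: "finite V"
    and inj: "\<And>x. (\<forall>u\<in>V. (\<Sum>w\<in>V. M u w * x w) = 0) \<Longrightarrow> (\<forall>w\<in>V. x w = 0)"
  shows "\<exists>x. \<forall>u\<in>V. (\<Sum>w\<in>V. M u w * x w) = b u"
proof -
  obtain vs where vs: "set vs = V" "distinct vs" using finite_distinct_list[OF fin] by blast
  define n where "n = length vs"
  have bij: "bij_betw ((!) vs) {..<n} V" using bij_betw_nth[OF vs(2) _ vs(1)[symmetric]] n_def by simp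
  define A where "A = mat n n (\<lambda>(i,j). M (vs!i) (vs!j))"
  have A: "A \<in> carrier_mat n n" unfolding A_def by simp
  have reidx: "\<And>F. (\<Sum>w\<in>V. F w) = (\<Sum>j<n. F (vs!j))"
    using sum.reindex_bij_betw[OF bij] by metis
  have Av: "\<And>v i. v \<in> carrier_vec n \<Longrightarrow> i < n \<Longrightarrow> (A *\<^sub>v v) $ i = (\<Sum>j<n. M (vs!i) (vs!j) * v $ j)"
    by (simp add: A_def scalar_prod_def row_def lessThan_atLeast0)
  define xo where "xo v w = v $ (the_inv_into {..<n} ((!) vs) w)" for v :: "real vec" and w :: 'v
  have xo: "\<And>v j. j < n \<Longrightarrow> xo v (vs!j) = v $ j"
    unfolding xo_def using bij by (simp add: bij_betw_def the_inv_into_f_f)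
  have "det A \<noteq> 0"
  proof
    assume "det A = 0"
    then obtain v where v: "v \<in> carrier_vec n" "v \<noteq> 0\<^sub>v n" "A *\<^sub>v v = 0\<^sub>v n"
      using det_0_iff_vec_prod_zero_field[OF A] by blast
    have "\<forall>u\<in>V. (\<Sum>w\<in>V. M u w * xo v w) = 0"
    proof
      fix u assume "u \<in> V"
      then obtain i where i: "i < n" "u = vs!i" using bij by (metis bij_betw_iff_bijections lessThan_iff)
      have "(\<Sum>w\<in>V. M u w * xo v w) = (\<Sum>j<n. M (vs!i) (vs!j) * v $ j)"
        by (simp add: reidx i xo)
      also have "\<dots> = (A *\<^sub>v v) $ i" using Av[OF v(1) i(1)] by simp
      also have "\<dots> = 0" using v(3) i by simp
      finally show "(\<Sum>w\<in>V. M u w * xo v w) = 0" .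
    qed
    then have "\<forall>w\<in>V. xo v w = 0" by (rule inj)
    then have "\<forall>j<n. v $ j = 0" using xo bij by (metis bij_betw_apply lessThan_iff)
    then have "v = 0\<^sub>v n" using v(1) by (intro eq_vecI) auto
    with v(2) show False by simp
  qed
  then obtain B where B: "B \<in> carrier_mat n n" "A * B = 1\<^sub>m n"
    using det_non_zero_imp_unit[OF A, of "()"] unfolding Units_def by (auto simp: ring_mat_def)
  define bv where "bv = vec n (\<lambda>i. b (vs!i))"
  define v where "v = B *\<^sub>v bv"
  have v: "v \<in> carrier_vec n" using B(1) unfolding v_def bv_def by simp
  have Abv: "A *\<^sub>v v = bv" unfolding v_def
  proof -
    have "A *\<^sub>v (B *\<^sub>v bv) = (A * B) *\<^sub>v bv"
      using assoc_mult_mat_vec[of A n n B n bv] A B(1) by (simp add: bv_def)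
    also have "\<dots> = bv" using B(2) by (simp add: bv_def)
    finally show "A *\<^sub>v (B *\<^sub>v bv) = bv" .
  qed
  show ?thesis
  proof (intro exI ballI)
    fix u assume "u \<in> V"
    then obtain i where i: "i < n" "u = vs!i" using bij by (metis bij_betw_iff_bijections lessThan_iff)
    have "(\<Sum>w\<in>V. M u w * xo v w) = (\<Sum>j<n. M (vs!i) (vs!j) * v $ j)"
      by (simp add: reidx i xo)
    also have "\<dots> = (A *\<^sub>v v) $ i" using Av[OF v i(1)] by simp
    also have "\<dots> = b u" using Abv i by (simp add: bv_def)
    finally show "(\<Sum>w\<in>V. M u w * xo v w) = b u" .
  qed
qed

definition grel :: "'e set \<Rightarrow> ('e \<Rightarrow> 'v \<times> 'v) \<Rightarrow> ('v \<times> 'v) set" where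
  "grel E ends = (\<Union>e\<in>E. {ends e, prod.swap (ends e)})"

lemma graph_connected_grel: "graph_connected V E ends \<longleftrightarrow> (\<forall>x\<in>V. \<forall>y\<in>V. (x, y) \<in> (grel E ends)\<^sup>*)"
  unfolding graph_connected_def grel_def by simp

lemma nc_split:
  assumes "finite E"
  shows "net_current E ends L f u =
    (\<Sum>e\<in>E. (if fst (ends e) = u then (f u - f (snd (ends e))) / L e else 0)
           + (if snd (ends e) = u then (f u - f (fst (ends e))) / L e else 0))"
  unfolding net_current_def using assms
  by (simp add: sum.distrib sum.inter_filter)

lemma nc_DS:
  assumes fV: "finite V" and fE: "finite E" and wf: "\<forall>e\<in>E. fst (ends e) \<in> V \<and> snd (ends e) \<in> V"
  shows "(\<Sum>u\<in>V. K u * net_current E ends L (F u) u) =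
    (\<Sum>e\<in>E. (K (fst (ends e)) * (F (fst (ends e)) (fst (ends e)) - F (fst (ends e)) (snd (ends e)))
            + K (snd (ends e)) * (F (snd (ends e)) (snd (ends e)) - F (snd (ends e)) (fst (ends e)))) / L e)"
proof -
  have "(\<Sum>u\<in>V. K u * net_current E ends L (F u) u) =
     (\<Sum>u\<in>V. \<Sum>e\<in>E. K u * ((if fst (ends e) = u then (F u u - F u (snd (ends e))) / L e else 0)
           + (if snd (ends e) = u then (F u u - F u (fst (ends e))) / L e else 0)))"
    by (simp add: nc_split[OF fE] sum_distrib_left)
  also have "\<dots> = (\<Sum>e\<in>E. \<Sum>u\<in>V. K u * ((if fst (ends e) = u then (F u u - F u (snd (ends e))) / L e else 0)
           + (if snd (ends e) = u then (F u u - F u (fst (ends e))) / L e else 0)))"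
    by (rule sum.swap)
  also have "\<dots> = (\<Sum>e\<in>E. (K (fst (ends e)) * (F (fst (ends e)) (fst (ends e)) - F (fst (ends e)) (snd (ends e)))
            + K (snd (ends e)) * (F (snd (ends e)) (snd (ends e)) - F (snd (ends e)) (fst (ends e)))) / L e)"
  proof (rule sum.cong[OF refl])
    fix e assume e: "e \<in> E"
    have "(\<Sum>u\<in>V. K u * ((if fst (ends e) = u then (F u u - F u (snd (ends e))) / L e else 0)
           + (if snd (ends e) = u then (F u u - F u (fst (ends e))) / L e else 0)))
        = (\<Sum>u\<in>V. (if fst (ends e) = u then K u * (F u u - F u (snd (ends e))) / L e else 0))
          + (\<Sum>u\<in>V. (if snd (ends e) = u then K u * (F u u - F u (fst (ends e))) / L e else 0))"
      unfolding sum.distrib[symmetric] by (rule sum.cong) (auto simp: distrib_left)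
    also have "\<dots> = K (fst (ends e)) * (F (fst (ends e)) (fst (ends e)) - F (fst (ends e)) (snd (ends e))) / L e
        + K (snd (ends e)) * (F (snd (ends e)) (snd (ends e)) - F (snd (ends e)) (fst (ends e))) / L e"
      using wf e fV by (simp add: sum.delta)
    finally show "(\<Sum>u\<in>V. K u * ((if fst (ends e) = u then (F u u - F u (snd (ends e))) / L e else 0)
           + (if snd (ends e) = u then (F u u - F u (fst (ends e))) / L e else 0))) =
       (K (fst (ends e)) * (F (fst (ends e)) (fst (ends e)) - F (fst (ends e)) (snd (ends e)))
            + K (snd (ends e)) * (F (snd (ends e)) (snd (ends e)) - F (snd (ends e)) (fst (ends e)))) / L e"
      by (simp add: add_divide_distrib)
  qed
  finally show ?thesis .
qed

lemma nc_DI: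
  assumes fV: "finite V" and fE: "finite E" and wf: "\<forall>e\<in>E. fst (ends e) \<in> V \<and> snd (ends e) \<in> V"
  shows "(\<Sum>u\<in>V. K u * net_current E ends L f u) =
    (\<Sum>e\<in>E. (f (fst (ends e)) - f (snd (ends e))) * (K (fst (ends e)) - K (snd (ends e))) / L e)"
  using nc_DS[OF fV fE wf, of K L "\<lambda>_. f"]
  by (simp add: algebra_simps)

lemma nc_diff:
  assumes "finite E"
  shows "net_current E ends L (\<lambda>x. f x - g x) u = net_current E ends L f u - net_current E ends L g u"
  unfolding nc_split[OF assms] sum_subtractf[symmetric]
  by (rule sum.cong) (auto simp: diff_divide_distrib)

lemma nc_scale:
  assumes "finite E"
  shows "net_current E ends L (\<lambda>x. c * f x) u = c * net_current E ends L f u"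
  unfolding nc_split[OF assms] sum_distrib_left
  by (rule sum.cong) (auto simp: algebra_simps)

lemma nc_sum:
  assumes "finite E" "finite S"
  shows "net_current E ends L (\<lambda>x. \<Sum>i\<in>S. F i x) u = (\<Sum>i\<in>S. net_current E ends L (F i) u)"
  unfolding nc_split[OF assms(1)]
  apply (subst sum.swap)
  apply (rule sum.cong[OF refl])
  apply (simp add: sum_subtractf[symmetric] sum_divide_distrib[symmetric] sum.distrib[symmetric])
  done

lemma nc_cong:
  assumes wf: "\<forall>e\<in>E. fst (ends e) \<in> V \<and> snd (ends e) \<in> V" and u: "u \<in> V"
    and eq: "\<forall>x\<in>V. f x = g x + c"
  shows "net_current E ends L f u = net_current E ends L g u"
  unfolding net_current_def using wf u eq
  by (intro arg_cong2[where f="(+)"] sum.cong) auto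

lemma nc_sum_zero:
  assumes fV: "finite V" and fE: "finite E" and wf: "\<forall>e\<in>E. fst (ends e) \<in> V \<and> snd (ends e) \<in> V"
  shows "(\<Sum>u\<in>V. net_current E ends L f u) = 0"
  using nc_DI[OF fV fE wf, of "\<lambda>_. 1" L f] by simp

lemma harmonic_edges:
  assumes fV: "finite V" and fE: "finite E" and wf: "\<forall>e\<in>E. fst (ends e) \<in> V \<and> snd (ends e) \<in> V"
    and pos: "\<forall>e\<in>E. L e > 0"
    and h: "\<forall>u\<in>V. net_current E ends L h u = 0"
  shows "\<forall>e\<in>E. h (fst (ends e)) = h (snd (ends e))"
proof -
  define q where "q e = (h (fst (ends e)) - h (snd (ends e))) * (h (fst (ends e)) - h (snd (ends e))) / L e" for e
  have A: "(\<Sum>u\<in>V. h u * net_current E ends L h u) = 0" using h by simp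
  have B: "(\<Sum>u\<in>V. h u * net_current E ends L h u) = (\<Sum>e\<in>E. q e)"
    unfolding q_def by (rule nc_DI[OF fV fE wf])
  have S: "(\<Sum>e\<in>E. q e) = 0" using A B by linarith
  have N: "\<forall>e\<in>E. 0 \<le> q e"
    using pos unfolding q_def by (metis divide_nonneg_pos zero_le_square)
  have Z: "\<forall>e\<in>E. q e = 0" using sum_nonneg_eq_0_iff[OF fE, of q] S N by simp
  show ?thesis
  proof
    fix e assume e: "e \<in> E"
    have "q e = 0" using Z e by simp
    then have "h (fst (ends e)) = h (snd (ends e)) \<or> L e = 0" unfolding q_def by simp
    then show "h (fst (ends e)) = h (snd (ends e))" using pos e by force
  qed
qed

lemma edges_const_rtrancl:
  assumes "\<forall>e\<in>E. h (fst (ends e)) = h (snd (ends e))" "(x, y) \<in> (grel E ends)\<^sup>*"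
  shows "h x = h y"
  using assms(2)
proof (induction rule: rtrancl_induct)
  case base then show ?case by simp
next
  case (step y z)
  then obtain e where "e \<in> E" "(y, z) = ends e \<or> (y, z) = prod.swap (ends e)"
    unfolding grel_def by auto
  then show ?case using assms(1) step.IH
    by (cases "ends e") auto
qed

lemma harmonic_const:
  assumes fV: "finite V" and fE: "finite E" and wf: "\<forall>e\<in>E. fst (ends e) \<in> V \<and> snd (ends e) \<in> V"
    and pos: "\<forall>e\<in>E. L e > 0" and con: "graph_connected V E ends"
    and h: "\<forall>u\<in>V. net_current E ends L h u = 0"
    and x: "x \<in> V" and y: "y \<in> V"
  shows "h x = h y"
  using edges_const_rtrancl[OF harmonic_edges[OF fV fE wf pos h]] con x y
  unfolding graph_connected_grel by blast

definition demand :: "'v \<Rightarrow> 'v \<Rightarrow> 'v \<Rightarrow> real" where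
  "demand z y u = (if u = y then 1 else 0) - (if u = z then 1 else 0)"

lemma voltage_eq:
  assumes fV: "finite V" and fE: "finite E" and wf: "\<forall>e\<in>E. fst (ends e) \<in> V \<and> snd (ends e) \<in> V"
    and pos: "\<forall>e\<in>E. L e > 0" and con: "graph_connected V E ends" and z: "z \<in> V"
    and f1: "\<forall>u\<in>V. net_current E ends L f u = demand z y u"
    and f2: "f z = 0" and f3: "\<forall>u. u \<notin> V \<longrightarrow> f u = 0"
  shows "voltage V E ends L z y = f"
  unfolding voltage_def
proof (rule the_equality)
  show "(\<forall>u\<in>V. net_current E ends L f u = (if u = y then 1 else 0) - (if u = z then 1 else 0)) \<and> f z = 0 \<and> (\<forall>u. u \<notin> V \<longrightarrow> f u = 0)"
    using f1 f2 f3 by (simp add: demand_def)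
next
  fix f' assume a: "(\<forall>u\<in>V. net_current E ends L f' u = (if u = y then 1 else 0) - (if u = z then 1 else 0)) \<and> f' z = 0 \<and> (\<forall>u. u \<notin> V \<longrightarrow> f' u = 0)"
  have h: "\<forall>u\<in>V. net_current E ends L (\<lambda>x. f' x - f x) u = 0"
    using a f1 by (simp add: nc_diff[OF fE] demand_def)
  show "f' = f"
  proof
    fix x show "f' x = f x"
    proof (cases "x \<in> V")
      case True
      have "f' x - f x = f' z - f z"
        using harmonic_const[OF fV fE wf pos con h True z] by simp
      then show ?thesis using a f2 by simp
    next
      case False then show ?thesis using a f3 by simp
    qed
  qed
qed

lemma nc_expand:
  assumes fE: "finite E" and fV: "finite V" and wf: "\<forall>e\<in>E. fst (ends e) \<in> V \<and> snd (ends e) \<in> V" and u: "u \<in> V"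
  shows "net_current E ends L f u = (\<Sum>w\<in>V. net_current E ends L (\<lambda>x. if x = w then 1 else 0) u * f w)"
proof -
  have "net_current E ends L f u = net_current E ends L (\<lambda>x. \<Sum>w\<in>V. f w * (if x = w then 1 else 0)) u"
    by (rule nc_cong[OF wf u, where c=0]) (simp add: fV if_distrib sum.delta' cong: if_cong)
  also have "\<dots> = (\<Sum>w\<in>V. f w * net_current E ends L (\<lambda>x. if x = w then 1 else 0) u)"
    by (simp add: nc_sum[OF fE fV] nc_scale[OF fE])
  finally show ?thesis by (simp add: mult.commute)
qed

lemma voltage_exists:
  assumes fV: "finite V" and fE: "finite E" and wf: "\<forall>e\<in>E. fst (ends e) \<in> V \<and> snd (ends e) \<in> V"
    and pos: "\<forall>e\<in>E. L e > 0" and con: "graph_connected V E ends" and z: "z \<in> V"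
    and d: "(\<Sum>u\<in>V. d u) = 0"
  shows "\<exists>f. (\<forall>u\<in>V. net_current E ends L f u = d u) \<and> f z = 0 \<and> (\<forall>u. u \<notin> V \<longrightarrow> f u = 0)"
proof -
  define M where "M u w = (if u = z then (if w = z then 1 else 0) else net_current E ends L (\<lambda>x. if x = w then 1 else 0) u)" for u w
  define b where "b u = (if u = z then 0 else d u)" for u
  have key: "\<And>x u. u \<in> V \<Longrightarrow> (\<Sum>w\<in>V. M u w * x w) =
      (if u = z then x z else net_current E ends L (\<lambda>y. if y \<in> V then x y else 0) u)"
  proof -
    fix x u assume u: "u \<in> V"
    show "(\<Sum>w\<in>V. M u w * x w) = (if u = z then x z else net_current E ends L (\<lambda>y. if y \<in> V then x y else 0) u)"
    proof (cases "u = z")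
      case True
      have "\<And>w. M u w * x w = (if w = z then x w else 0)" using True by (simp add: M_def)
      then have "(\<Sum>w\<in>V. M u w * x w) = (\<Sum>w\<in>V. if w = z then x w else 0)" by simp
      also have "\<dots> = x z" using z fV by (simp add: sum.delta')
      finally show ?thesis using True by simp
    next
      case False
      have "net_current E ends L (\<lambda>y. if y \<in> V then x y else 0) u = (\<Sum>w\<in>V. net_current E ends L (\<lambda>x. if x = w then 1 else 0) u * (if w \<in> V then x w else 0))"
        by (rule nc_expand[OF fE fV wf u])
      also have "\<dots> = (\<Sum>w\<in>V. M u w * x w)" using False by (simp add: M_def)
      finally show ?thesis using False by simp
    qed
  qed
  have "\<exists>x. \<forall>u\<in>V. (\<Sum>w\<in>V. M u w * x w) = b u"
  proof (rule LA_solve[OF fV])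
    fix x assume hx: "\<forall>u\<in>V. (\<Sum>w\<in>V. M u w * x w) = 0"
    define f where "f y = (if y \<in> V then x y else 0)" for y
    have xz: "x z = 0" using hx key[OF z, of x] z by simp
    have nc1: "\<forall>u\<in>V-{z}. net_current E ends L f u = 0"
    proof
      fix u assume u: "u \<in> V-{z}"
      then show "net_current E ends L f u = 0" using hx key[of u x] unfolding f_def by simp
    qed
    have "(\<Sum>u\<in>V. net_current E ends L f u) = 0" by (rule nc_sum_zero[OF fV fE wf])
    then have "net_current E ends L f z = 0"
      using nc1 sum.remove[OF fV z, of "\<lambda>u. net_current E ends L f u"] by simp
    then have nc: "\<forall>u\<in>V. net_current E ends L f u = 0" using nc1 by blast
    show "\<forall>w\<in>V. x w = 0"
    proof
      fix w assume w: "w \<in> V"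
      have "f w = f z" by (rule harmonic_const[OF fV fE wf pos con nc w z])
      then show "x w = 0" using w z xz by (simp add: f_def)
    qed
  qed
  then obtain x where hx: "\<forall>u\<in>V. (\<Sum>w\<in>V. M u w * x w) = b u" by blast
  define f where "f y = (if y \<in> V then x y else 0)" for y
  have xz: "x z = 0" using hx key[OF z, of x] z by (simp add: b_def)
  have nc1: "\<forall>u\<in>V-{z}. net_current E ends L f u = d u"
  proof
    fix u assume u: "u \<in> V-{z}"
    then show "net_current E ends L f u = d u" using hx key[of u x] unfolding f_def b_def by simp
  qed
  have "(\<Sum>u\<in>V. net_current E ends L f u) = 0" by (rule nc_sum_zero[OF fV fE wf])
  then have "net_current E ends L f z + (\<Sum>u\<in>V-{z}. d u) = 0"
    using nc1 sum.remove[OF fV z, of "\<lambda>u. net_current E ends L f u"] by simp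
  moreover have "d z + (\<Sum>u\<in>V-{z}. d u) = 0" using d sum.remove[OF fV z, of d] by simp
  ultimately have "net_current E ends L f z = d z" by simp
  then have "\<forall>u\<in>V. net_current E ends L f u = d u" using nc1 by blast
  then show ?thesis using xz z by (intro exI[of _ f]) (auto simp: f_def)
qed

lemma demand_sum:
  assumes "finite V" "y \<in> V" "z \<in> V"
  shows "(\<Sum>u\<in>V. K u * demand z y u) = K y - K z"
proof -
  have "(\<Sum>u\<in>V. K u * demand z y u) = (\<Sum>u\<in>V. (if u = y then K u else 0)) - (\<Sum>u\<in>V. (if u = z then K u else 0))"
    unfolding demand_def sum_subtractf[symmetric] by (rule sum.cong) auto
  then show ?thesis using assms by (simp add: sum.delta')
qed

lemma nc_zero: "net_current E ends L (\<lambda>_. 0) u = 0"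
  unfolding net_current_def by simp

locale mgraph =
  fixes V :: "'v set" and E :: "'e set" and ends :: "'e \<Rightarrow> 'v \<times> 'v" and L :: "'e \<Rightarrow> real" and z :: 'v
  assumes fV: "finite V" and fE: "finite E" and wf: "\<forall>e\<in>E. fst (ends e) \<in> V \<and> snd (ends e) \<in> V"
    and pos: "\<forall>e\<in>E. L e > 0" and con: "graph_connected V E ends" and zV: "z \<in> V"
begin

definition g :: "'v \<Rightarrow> 'v \<Rightarrow> real" where
  "g x y = voltage V E ends L z y x"

lemma g_char:
  assumes y: "y \<in> V"
  shows "\<forall>u\<in>V. net_current E ends L (\<lambda>x. g x y) u = demand z y u"
    and "g z y = 0" and "\<And>u. u \<notin> V \<Longrightarrow> g u y = 0"
proof -
  have "(\<Sum>u\<in>V. demand z y u) = 0" using demand_sum[OF fV y zV, of "\<lambda>_. 1"] by simp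
  then obtain f where f: "\<forall>u\<in>V. net_current E ends L f u = demand z y u" "f z = 0" "\<forall>u. u \<notin> V \<longrightarrow> f u = 0"
    using voltage_exists[OF fV fE wf pos con zV] by blast
  have v: "voltage V E ends L z y = f" by (rule voltage_eq[OF fV fE wf pos con zV f(1) f(2) f(3)])
  have gf: "(\<lambda>x. g x y) = f" unfolding g_def v by simp
  show "\<forall>u\<in>V. net_current E ends L (\<lambda>x. g x y) u = demand z y u" using f(1) gf by simp
  show "g z y = 0" using f(2) gf by metis
  show "\<And>u. u \<notin> V \<Longrightarrow> g u y = 0" using f(3) gf by metis
qed

lemma g_z_right: "g x z = 0"
proof -
  have "voltage V E ends L z z = (\<lambda>_. 0)"
    by (rule voltage_eq[OF fV fE wf pos con zV]) (auto simp: nc_zero demand_def)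
  then show ?thesis unfolding g_def by simp
qed


lemma g_sym:
  assumes x: "x \<in> V" and y: "y \<in> V"
  shows "g x y = g y x"
proof -
  have A: "(\<Sum>u\<in>V. g u x * net_current E ends L (\<lambda>u. g u y) u) =
    (\<Sum>e\<in>E. (g (fst (ends e)) y - g (snd (ends e)) y) * (g (fst (ends e)) x - g (snd (ends e)) x) / L e)"
    by (rule nc_DI[OF fV fE wf])
  have B: "(\<Sum>u\<in>V. g u y * net_current E ends L (\<lambda>u. g u x) u) =
    (\<Sum>e\<in>E. (g (fst (ends e)) x - g (snd (ends e)) x) * (g (fst (ends e)) y - g (snd (ends e)) y) / L e)"
    by (rule nc_DI[OF fV fE wf])
  have A': "(\<Sum>u\<in>V. g u x * net_current E ends L (\<lambda>u. g u y) u) = g y x"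
    using g_char(1)[OF y] demand_sum[OF fV y zV, of "\<lambda>u. g u x"] g_char(2)[OF x] by simp
  have B': "(\<Sum>u\<in>V. g u y * net_current E ends L (\<lambda>u. g u x) u) = g x y"
    using g_char(1)[OF x] demand_sum[OF fV x zV, of "\<lambda>u. g u y"] g_char(2)[OF y] by simp
  show ?thesis using A B A' B' by (simp add: mult.commute)
qed

definition res :: "'v \<Rightarrow> 'v \<Rightarrow> real" where
  "res x y = g x x + g y y - 2 * g x y"

lemma eff_res_g:
  assumes x: "x \<in> V" and y: "y \<in> V"
  shows "eff_res V E ends L x y = res x y"
proof -
  define f where "f u = (if u \<in> V then g u x - g u y - (g y x - g y y) else 0)" for u
  have "voltage V E ends L y x = f"
  proof (rule voltage_eq[OF fV fE wf pos con y])
    show "\<forall>u\<in>V. net_current E ends L f u = demand y x u"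
    proof
      fix u assume u: "u \<in> V"
      have "net_current E ends L f u = net_current E ends L (\<lambda>w. g w x - g w y) u"
        by (rule nc_cong[OF wf u, where c="-(g y x - g y y)"]) (simp add: f_def)
      also have "\<dots> = demand z x u - demand z y u"
        using g_char(1)[OF x] g_char(1)[OF y] u by (simp add: nc_diff[OF fE])
      also have "\<dots> = demand y x u" by (simp add: demand_def)
      finally show "net_current E ends L f u = demand y x u" .
    qed
    show "f y = 0" using y by (simp add: f_def)
    show "\<forall>u. u \<notin> V \<longrightarrow> f u = 0" by (simp add: f_def)
  qed
  then show ?thesis unfolding eff_res_def res_def f_def using x y g_sym[OF x y] by simp
qed

lemma res_sym: "x \<in> V \<Longrightarrow> y \<in> V \<Longrightarrow> res x y = res y x"
  unfolding res_def using g_sym by simp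

definition psi :: "'e \<Rightarrow> 'v \<Rightarrow> real" where
  "psi e x = g x (fst (ends e)) - g x (snd (ends e))"

lemma nc_psi:
  assumes e: "e \<in> E" and u: "u \<in> V"
  shows "net_current E ends L (psi e) u = demand (snd (ends e)) (fst (ends e)) u"
proof -
  have "net_current E ends L (psi e) u = net_current E ends L (\<lambda>x. g x (fst (ends e)) - g x (snd (ends e))) u"
    unfolding psi_def by simp
  also have "\<dots> = demand z (fst (ends e)) u - demand z (snd (ends e)) u"
    using g_char(1) wf e u by (simp add: nc_diff[OF fE])
  also have "\<dots> = demand (snd (ends e)) (fst (ends e)) u" by (simp add: demand_def)
  finally show ?thesis .
qed

lemma psi_z: "e \<in> E \<Longrightarrow> psi e z = 0"
  unfolding psi_def using g_char(2) wf by simp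

lemma psi_alt: "e \<in> E \<Longrightarrow> x \<in> V \<Longrightarrow> psi e x = g (fst (ends e)) x - g (snd (ends e)) x"
  unfolding psi_def using g_sym wf by simp

lemma F2:
  assumes x: "x \<in> V" and y: "y \<in> V"
  shows "(\<Sum>e\<in>E. psi e x * psi e y / L e) = g x y"
proof -
  have A: "(\<Sum>u\<in>V. g u y * net_current E ends L (\<lambda>u. g u x) u) =
    (\<Sum>e\<in>E. (g (fst (ends e)) x - g (snd (ends e)) x) * (g (fst (ends e)) y - g (snd (ends e)) y) / L e)"
    by (rule nc_DI[OF fV fE wf])
  have A': "(\<Sum>u\<in>V. g u y * net_current E ends L (\<lambda>u. g u x) u) = g x y"
    using g_char(1)[OF x] demand_sum[OF fV x zV, of "\<lambda>u. g u y"] g_char(2)[OF y] by simp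
  have "(\<Sum>e\<in>E. psi e x * psi e y / L e) = (\<Sum>e\<in>E. (g (fst (ends e)) x - g (snd (ends e)) x) * (g (fst (ends e)) y - g (snd (ends e)) y) / L e)"
    by (rule sum.cong) (simp_all add: psi_alt x y)
  then show ?thesis using A A' by simp
qed

lemma demand_diag: "demand z u u = 1 - (if u = z then 1 else 0)"
  by (simp add: demand_def)

lemma F1:
  "(\<Sum>e\<in>E. (psi e (fst (ends e)) - psi e (snd (ends e))) / L e) = real (card V) - 1"
proof -
  have A: "(\<Sum>u\<in>V. 1 * net_current E ends L (\<lambda>x. g x u) u) =
    (\<Sum>e\<in>E. (1 * (g (fst (ends e)) (fst (ends e)) - g (snd (ends e)) (fst (ends e)))
            + 1 * (g (snd (ends e)) (snd (ends e)) - g (fst (ends e)) (snd (ends e)))) / L e)"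
    by (rule nc_DS[OF fV fE wf])
  have B: "(\<Sum>u\<in>V. 1 * net_current E ends L (\<lambda>x. g x u) u) = (\<Sum>u\<in>V. 1 - (if u = z then 1 else 0))"
    using g_char(1) by (simp add: demand_diag)
  have C: "(\<Sum>u\<in>V. 1 - (if u = z then 1 else (0::real))) = real (card V) - 1"
    using fV zV by (simp add: sum_subtractf sum.delta')
  have "(\<Sum>e\<in>E. (psi e (fst (ends e)) - psi e (snd (ends e))) / L e) =
    (\<Sum>e\<in>E. (1 * (g (fst (ends e)) (fst (ends e)) - g (snd (ends e)) (fst (ends e)))
            + 1 * (g (snd (ends e)) (snd (ends e)) - g (fst (ends e)) (snd (ends e)))) / L e)"
    by (rule sum.cong) (simp_all add: psi_def)
  then show ?thesis using A B C by simp
qed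

definition T :: real where "T = (\<Sum>x\<in>V. g x x)"
definition sig :: "'v \<Rightarrow> real" where "sig u = (\<Sum>x\<in>V. g u x)"
definition S :: real where "S = (\<Sum>x\<in>V. sig x)"

lemma F3:
  "(\<Sum>e\<in>E. (g (fst (ends e)) (fst (ends e)) * (g (fst (ends e)) (fst (ends e)) - g (fst (ends e)) (snd (ends e)))
     + g (snd (ends e)) (snd (ends e)) * (g (snd (ends e)) (snd (ends e)) - g (fst (ends e)) (snd (ends e)))) / L e) = T"
proof -
  have A: "(\<Sum>u\<in>V. g u u * net_current E ends L (\<lambda>x. g x u) u) =
    (\<Sum>e\<in>E. (g (fst (ends e)) (fst (ends e)) * (g (fst (ends e)) (fst (ends e)) - g (snd (ends e)) (fst (ends e)))
            + g (snd (ends e)) (snd (ends e)) * (g (snd (ends e)) (snd (ends e)) - g (fst (ends e)) (snd (ends e)))) / L e)"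
    by (rule nc_DS[OF fV fE wf])
  have B: "(\<Sum>u\<in>V. g u u * net_current E ends L (\<lambda>x. g x u) u) = (\<Sum>u\<in>V. g u u * (1 - (if u = z then 1 else 0)))"
    using g_char(1) by (simp add: demand_diag)
  have C: "(\<Sum>u\<in>V. g u u * (1 - (if u = z then 1 else 0))) = T"
    using fV zV g_z_right[of z] by (simp add: T_def right_diff_distrib sum_subtractf if_distrib sum.delta' cong: if_cong) (rule sum.cong, auto)
  show ?thesis using A B C wf g_sym by (simp cong: sum.cong)
qed

lemma nc_sig:
  assumes u: "u \<in> V"
  shows "net_current E ends L sig u = 1 - real (card V) * (if u = z then 1 else 0)"
proof -
  have "net_current E ends L sig u = (\<Sum>x\<in>V. net_current E ends L (\<lambda>w. g w x) u)"
    unfolding sig_def by (rule nc_sum[OF fE fV])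
  also have "\<dots> = (\<Sum>x\<in>V. demand z x u)" using g_char(1) u by simp
  also have "\<dots> = (\<Sum>x\<in>V. (if u = x then 1 else 0)) - (\<Sum>x\<in>V. (if u = z then 1 else 0))"
    unfolding demand_def sum_subtractf[symmetric] by (rule sum.cong) auto
  also have "\<dots> = 1 - real (card V) * (if u = z then 1 else 0)" using u fV by simp
  finally show ?thesis .
qed

lemma sig_z: "sig z = 0"
  unfolding sig_def using g_char(2) by simp

lemma F4:
  "(\<Sum>e\<in>E. (g (fst (ends e)) (fst (ends e)) - g (snd (ends e)) (snd (ends e))) * (sig (fst (ends e)) - sig (snd (ends e))) / L e) = T"
proof -
  have A: "(\<Sum>u\<in>V. g u u * net_current E ends L sig u) =
    (\<Sum>e\<in>E. (sig (fst (ends e)) - sig (snd (ends e))) * (g (fst (ends e)) (fst (ends e)) - g (snd (ends e)) (snd (ends e))) / L e)"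
    by (rule nc_DI[OF fV fE wf])
  have B: "(\<Sum>u\<in>V. g u u * net_current E ends L sig u) = (\<Sum>u\<in>V. g u u * (1 - real (card V) * (if u = z then 1 else 0)))"
    using nc_sig by simp
  have C: "(\<Sum>u\<in>V. g u u * (1 - real (card V) * (if u = z then 1 else 0))) = T"
    using fV zV g_z_right[of z] by (simp add: T_def right_diff_distrib sum_subtractf if_distrib sum.delta' cong: if_cong) (rule sum.cong, auto)
  show ?thesis using A B C by (simp add: mult.commute)
qed

lemma F5:
  "(\<Sum>e\<in>E. (sig (fst (ends e)) * (g (fst (ends e)) (fst (ends e)) - g (fst (ends e)) (snd (ends e)))
     + sig (snd (ends e)) * (g (snd (ends e)) (snd (ends e)) - g (fst (ends e)) (snd (ends e)))) / L e) = S"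
proof -
  have A: "(\<Sum>u\<in>V. sig u * net_current E ends L (\<lambda>x. g x u) u) =
    (\<Sum>e\<in>E. (sig (fst (ends e)) * (g (fst (ends e)) (fst (ends e)) - g (snd (ends e)) (fst (ends e)))
            + sig (snd (ends e)) * (g (snd (ends e)) (snd (ends e)) - g (fst (ends e)) (snd (ends e)))) / L e)"
    by (rule nc_DS[OF fV fE wf])
  have B: "(\<Sum>u\<in>V. sig u * net_current E ends L (\<lambda>x. g x u) u) = (\<Sum>u\<in>V. sig u * (1 - (if u = z then 1 else 0)))"
    using g_char(1) by (simp add: demand_diag)
  have C: "(\<Sum>u\<in>V. sig u * (1 - (if u = z then 1 else 0))) = S"
    using fV zV sig_z by (simp add: S_def right_diff_distrib sum_subtractf if_distrib sum.delta' cong: if_cong) (rule sum.cong, auto)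
  show ?thesis using A B C wf g_sym by (simp cong: sum.cong)
qed

end

lemma nc_del:
  assumes fE: "finite E" and e: "e \<in> E"
  shows "net_current E ends L f u = net_current (E - {e}) ends L f u
     + (f (fst (ends e)) - f (snd (ends e))) / L e * demand (snd (ends e)) (fst (ends e)) u"
proof -
  have fE': "finite (E - {e})" using fE by simp
  have "net_current E ends L f u =
    ((if fst (ends e) = u then (f u - f (snd (ends e))) / L e else 0)
           + (if snd (ends e) = u then (f u - f (fst (ends e))) / L e else 0))
    + net_current (E - {e}) ends L f u"
    unfolding nc_split[OF fE] nc_split[OF fE'] by (rule sum.remove[OF fE e])
  moreover have "((if fst (ends e) = u then (f u - f (snd (ends e))) / L e else 0)
           + (if snd (ends e) = u then (f u - f (fst (ends e))) / L e else 0))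
     = (f (fst (ends e)) - f (snd (ends e))) / L e * demand (snd (ends e)) (fst (ends e)) u"
    by (auto simp: demand_def diff_divide_distrib)
  ultimately show ?thesis by simp
qed

lemma conn_sub:
  assumes "graph_connected V E ends" "grel E ends \<subseteq> (grel E' ends)\<^sup>*"
  shows "graph_connected V E' ends"
  using assms rtrancl_subset_rtrancl unfolding graph_connected_grel by blast

lemma grel_sym: "(x, y) \<in> (grel E ends)\<^sup>* \<Longrightarrow> (y, x) \<in> (grel E ends)\<^sup>*"
proof -
  have "(grel E ends)\<inverse> = grel E ends" unfolding grel_def by (auto; metis swap_swap swap_simp)
  moreover assume "(x, y) \<in> (grel E ends)\<^sup>*"
  ultimately show ?thesis using rtrancl_converseI by fastforce
qed

lemma grel_minus: "grel E ends \<subseteq> grel (E - {e}) ends \<union> {ends e, prod.swap (ends e)}"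
  unfolding grel_def by auto

lemma alg_del:
  fixes M d :: real
  assumes M: "M > 0" and k: "1 - d / M \<noteq> 0"
  shows "M + d / (1 - d / M) = M / (1 - d / M)"
    and "(d / (1 - d / M)) / (M + d / (1 - d / M)) = d / M"
proof -
  have Ld: "M - d \<noteq> 0" using k M by (auto simp: field_simps)
  show A: "M + d / (1 - d / M) = M / (1 - d / M)" using M Ld by (simp add: field_simps)
  show "(d / (1 - d / M)) / (M + d / (1 - d / M)) = d / M" unfolding A using M k by (simp add: field_simps)
qed

lemma alg2:
  fixes M k X :: real
  assumes M: "M > 0" and k: "k \<noteq> 0"
  shows "M * (X / k)\<^sup>2 / (M / k)\<^sup>2 = X\<^sup>2 / M"
proof -
  have "(X / k)\<^sup>2 / (M / k)\<^sup>2 = ((X / k) / (M / k))\<^sup>2" by (simp add: power_divide)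
  also have "(X / k) / (M / k) = X / M" using k by simp
  finally have "M * (X / k)\<^sup>2 / (M / k)\<^sup>2 = M * (X / M)\<^sup>2" by (metis times_divide_eq_right)
  also have "\<dots> = X\<^sup>2 / M" using M by (simp add: power2_eq_square)
  finally show ?thesis .
qed

context mgraph
begin

lemma del_wf:
  shows "finite (E - {e})" "\<forall>e'\<in>E - {e}. fst (ends e') \<in> V \<and> snd (ends e') \<in> V" "\<forall>e'\<in>E - {e}. L e' > 0"
  using fE wf pos by auto

definition cc :: "'e \<Rightarrow> real" where
  "cc e = (psi e (fst (ends e)) - psi e (snd (ends e))) / L e"

lemma nc_psi_del:
  assumes e: "e \<in> E" and u: "u \<in> V"
  shows "net_current (E - {e}) ends L (psi e) u = (1 - cc e) * demand (snd (ends e)) (fst (ends e)) u"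
  using nc_del[OF fE e, of ends L "psi e" u] nc_psi[OF e u] unfolding cc_def
  by (simp add: algebra_simps)

lemma loop_conn:
  assumes e: "e \<in> E" and ab: "fst (ends e) = snd (ends e)"
  shows "graph_connected V (E - {e}) ends"
proof (rule conn_sub[OF con])
  show "grel E ends \<subseteq> (grel (E - {e}) ends)\<^sup>*"
  proof
    fix p assume p: "p \<in> grel E ends"
    obtain a where a: "ends e = (a, a)" using ab by (cases "ends e") simp
    have "p \<in> grel (E - {e}) ends \<or> p = (a, a)"
      using p a unfolding grel_def by auto
    then show "p \<in> (grel (E - {e}) ends)\<^sup>*"
    proof
      assume "p \<in> grel (E - {e}) ends" then show ?thesis by (rule r_into_rtrancl)
    next
      assume "p = (a, a)" then show ?thesis by simp
    qed
  qed
qed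

lemma loop_case:
  assumes e: "e \<in> E" and ab: "fst (ends e) = snd (ends e)"
  shows "psi e = (\<lambda>_. 0)" "cc e = 0" "contr_coef V E ends L e = 0" "y_term1 V E ends L e = 0"
    "y_term2 V E ends L e z = 0"
proof -
  show ps: "psi e = (\<lambda>_. 0)" unfolding psi_def using ab by simp
  show "cc e = 0" unfolding cc_def ps by simp
  have con': "graph_connected V (E - {e}) ends" by (rule loop_conn[OF e ab])
  have nb: "\<not> is_bridge V E ends e" unfolding is_bridge_def using con' by simp
  have v0: "voltage V (E - {e}) ends L (fst (ends e)) (fst (ends e)) = (\<lambda>_. 0)"
    by (rule voltage_eq[OF fV del_wf con']) (auto simp: nc_zero demand_def e wf)
  have R: "R_del V E ends L e = 0" unfolding R_del_def eff_res_def using v0 ab by simp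
  show "contr_coef V E ends L e = 0" unfolding contr_coef_def using nb R by simp
  show "y_term1 V E ends L e = 0" unfolding y_term1_def using nb R by simp
  show "y_term2 V E ends L e z = 0" unfolding y_term2_def R_a_def R_b_def using nb v0 ab by simp
qed

lemma del_voltages:
  assumes e: "e \<in> E" and con': "graph_connected V (E - {e}) ends" and k: "1 - cc e \<noteq> 0"
  shows "voltage V (E - {e}) ends L (snd (ends e)) (fst (ends e)) =
           (\<lambda>u. if u \<in> V then (psi e u - psi e (snd (ends e))) / (1 - cc e) else 0)"
    and "voltage V (E - {e}) ends L (fst (ends e)) (snd (ends e)) =
           (\<lambda>u. if u \<in> V then (psi e (fst (ends e)) - psi e u) / (1 - cc e) else 0)"
proof -
  let ?k = "1 - cc e"
  have aV: "fst (ends e) \<in> V" and bV: "snd (ends e) \<in> V" using wf e by auto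
  show "voltage V (E - {e}) ends L (snd (ends e)) (fst (ends e)) =
           (\<lambda>u. if u \<in> V then (psi e u - psi e (snd (ends e))) / ?k else 0)"
  proof (rule voltage_eq[OF fV del_wf con' bV])
    show "\<forall>u\<in>V. net_current (E - {e}) ends L (\<lambda>u. if u \<in> V then (psi e u - psi e (snd (ends e))) / ?k else 0) u =
        demand (snd (ends e)) (fst (ends e)) u"
    proof
      fix u assume u: "u \<in> V"
      have "net_current (E - {e}) ends L (\<lambda>u. if u \<in> V then (psi e u - psi e (snd (ends e))) / ?k else 0) u
          = net_current (E - {e}) ends L (\<lambda>x. inverse ?k * psi e x) u"
        by (rule nc_cong[OF del_wf(2) u, where c = "- inverse ?k * psi e (snd (ends e))"])
          (simp add: divide_inverse algebra_simps)
      also have "\<dots> = inverse ?k * ((1 - cc e) * demand (snd (ends e)) (fst (ends e)) u)"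
        by (simp only: nc_scale[OF del_wf(1)] nc_psi_del[OF e u])
      also have "\<dots> = demand (snd (ends e)) (fst (ends e)) u" using k by simp
      finally show "net_current (E - {e}) ends L (\<lambda>u. if u \<in> V then (psi e u - psi e (snd (ends e))) / ?k else 0) u =
        demand (snd (ends e)) (fst (ends e)) u" .
    qed
  qed (auto simp: bV)
  show "voltage V (E - {e}) ends L (fst (ends e)) (snd (ends e)) =
           (\<lambda>u. if u \<in> V then (psi e (fst (ends e)) - psi e u) / ?k else 0)"
  proof (rule voltage_eq[OF fV del_wf con' aV])
    show "\<forall>u\<in>V. net_current (E - {e}) ends L (\<lambda>u. if u \<in> V then (psi e (fst (ends e)) - psi e u) / ?k else 0) u =
        demand (fst (ends e)) (snd (ends e)) u"
    proof
      fix u assume u: "u \<in> V"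
      have "net_current (E - {e}) ends L (\<lambda>u. if u \<in> V then (psi e (fst (ends e)) - psi e u) / ?k else 0) u
          = net_current (E - {e}) ends L (\<lambda>x. (- inverse ?k) * psi e x) u"
        by (rule nc_cong[OF del_wf(2) u, where c = "inverse ?k * psi e (fst (ends e))"])
          (simp add: divide_inverse algebra_simps)
      also have "\<dots> = (- inverse ?k) * ((1 - cc e) * demand (snd (ends e)) (fst (ends e)) u)"
        by (simp only: nc_scale[OF del_wf(1)] nc_psi_del[OF e u])
      also have "\<dots> = demand (fst (ends e)) (snd (ends e)) u" using k by (simp add: demand_def)
      finally show "net_current (E - {e}) ends L (\<lambda>u. if u \<in> V then (psi e (fst (ends e)) - psi e u) / ?k else 0) u =
        demand (fst (ends e)) (snd (ends e)) u" .
    qed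
  qed (auto simp: aV)
qed


lemma nonbridge_case:
  assumes e: "e \<in> E" and ab: "fst (ends e) \<noteq> snd (ends e)" and nb: "\<not> is_bridge V E ends e"
  shows "contr_coef V E ends L e = cc e"
    and "y_term1 V E ends L e = L e * (cc e)\<^sup>2"
    and "y_term2 V E ends L e z = (psi e (fst (ends e)) + psi e (snd (ends e)))\<^sup>2 / L e"
proof -
  have aV: "fst (ends e) \<in> V" and bV: "snd (ends e) \<in> V" using wf e by auto
  have Le: "L e > 0" using pos e by auto
  have con': "graph_connected V (E - {e}) ends" using nb e unfolding is_bridge_def by simp
  have k: "1 - cc e \<noteq> 0"
  proof
    assume k0: "1 - cc e = 0"
    have "\<forall>u\<in>V. net_current (E - {e}) ends L (psi e) u = 0"
      using nc_psi_del[OF e] k0 by simp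
    then have "psi e (fst (ends e)) = psi e (snd (ends e))"
      by (rule harmonic_const[OF fV del_wf con' _ aV bV])
    then have "cc e = 0" unfolding cc_def by simp
    then show False using k0 by simp
  qed
  note V1 = del_voltages(1)[OF e con' k] and V2 = del_voltages(2)[OF e con' k]
  define d where "d = psi e (fst (ends e)) - psi e (snd (ends e))"
  have ccd: "cc e = d / L e" unfolding cc_def d_def by simp
  have R: "R_del V E ends L e = d / (1 - d / L e)"
    unfolding R_del_def eff_res_def V1 using aV by (simp add: d_def ccd)
  have Ra: "R_a V E ends L e z = psi e (fst (ends e)) / (1 - cc e)"
    unfolding R_a_def V2 using zV psi_z[OF e] by simp
  have Rb: "R_b V E ends L e z = - psi e (snd (ends e)) / (1 - cc e)"
    unfolding R_b_def V1 using zV psi_z[OF e] by simp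
  have k': "1 - d / L e \<noteq> 0" using k ccd by simp
  note A = alg_del[OF Le k']
  show "contr_coef V E ends L e = cc e"
    unfolding contr_coef_def using nb R A(2) ccd by simp
  show "y_term1 V E ends L e = L e * (cc e)\<^sup>2"
  proof -
    have "y_term1 V E ends L e = L e * ((d / (1 - d / L e)) / (L e + d / (1 - d / L e)))\<^sup>2"
      unfolding y_term1_def using nb R by (simp only: if_False power_divide times_divide_eq_right)
    also have "\<dots> = L e * (cc e)\<^sup>2" by (simp only: A(2) ccd)
    finally show ?thesis .
  qed
  have "y_term2 V E ends L e z = L e * ((psi e (fst (ends e)) + psi e (snd (ends e))) / (1 - d / L e))\<^sup>2 / (L e / (1 - d / L e))\<^sup>2"
    unfolding y_term2_def using nb R A(1) Ra Rb ccd by (simp add: add_divide_distrib diff_divide_distrib)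
  also have "\<dots> = (psi e (fst (ends e)) + psi e (snd (ends e)))\<^sup>2 / L e"
    by (rule alg2[OF Le k'])
  finally show "y_term2 V E ends L e z = (psi e (fst (ends e)) + psi e (snd (ends e)))\<^sup>2 / L e" .
qed

lemma bridge_case:
  assumes e: "e \<in> E" and br: "is_bridge V E ends e"
  shows "fst (ends e) \<noteq> snd (ends e)" and "cc e = 1" and "contr_coef V E ends L e = cc e"
    and "y_term1 V E ends L e = L e * (cc e)\<^sup>2"
    and "y_term2 V E ends L e z = (psi e (fst (ends e)) + psi e (snd (ends e)))\<^sup>2 / L e"
proof -
  have aV: "fst (ends e) \<in> V" and bV: "snd (ends e) \<in> V" using wf e by auto
  have Le: "L e > 0" using pos e by auto
  have ncon: "\<not> graph_connected V (E - {e}) ends" using br unfolding is_bridge_def by simp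
  show ab: "fst (ends e) \<noteq> snd (ends e)" using loop_conn[OF e] ncon by blast
  show k0: "cc e = 1"
  proof (rule ccontr)
    assume k: "cc e \<noteq> 1"
    define C where "C = {u. (fst (ends e), u) \<in> (grel (E - {e}) ends)\<^sup>*}"
    define K where "K u = (if u \<in> C then 1 else 0::real)" for u
    have KE: "\<forall>e'\<in>E - {e}. K (fst (ends e')) = K (snd (ends e'))"
    proof
      fix e' assume e': "e' \<in> E - {e}"
      have p1: "(fst (ends e'), snd (ends e')) \<in> grel (E - {e}) ends"
        using e' unfolding grel_def by (intro UN_I[of e']) auto
      have p2: "(snd (ends e'), fst (ends e')) \<in> grel (E - {e}) ends"
        using e' unfolding grel_def by (intro UN_I[of e']) (auto simp: prod.swap_def)
      have "fst (ends e') \<in> C \<longleftrightarrow> snd (ends e') \<in> C"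
      proof
        assume "fst (ends e') \<in> C"
        then have "(fst (ends e), fst (ends e')) \<in> (grel (E - {e}) ends)\<^sup>*" unfolding C_def by simp
        then have "(fst (ends e), snd (ends e')) \<in> (grel (E - {e}) ends)\<^sup>*" using p1 by (rule rtrancl_into_rtrancl)
        then show "snd (ends e') \<in> C" unfolding C_def by simp
      next
        assume "snd (ends e') \<in> C"
        then have "(fst (ends e), snd (ends e')) \<in> (grel (E - {e}) ends)\<^sup>*" unfolding C_def by simp
        then have "(fst (ends e), fst (ends e')) \<in> (grel (E - {e}) ends)\<^sup>*" using p2 by (rule rtrancl_into_rtrancl)
        then show "fst (ends e') \<in> C" unfolding C_def by simp
      qed
      then show "K (fst (ends e')) = K (snd (ends e'))" unfolding K_def by simp
    qed
    have D: "(\<Sum>u\<in>V. K u * net_current (E - {e}) ends L (psi e) u) =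
      (\<Sum>e'\<in>E - {e}. (psi e (fst (ends e')) - psi e (snd (ends e'))) * (K (fst (ends e')) - K (snd (ends e'))) / L e')"
      by (rule nc_DI[OF fV del_wf(1) del_wf(2)])
    also have "\<dots> = 0" using KE by simp
    finally have D0: "(\<Sum>u\<in>V. K u * net_current (E - {e}) ends L (psi e) u) = 0" .
    have "(\<Sum>u\<in>V. K u * net_current (E - {e}) ends L (psi e) u) = (\<Sum>u\<in>V. (K u * (1 - cc e)) * demand (snd (ends e)) (fst (ends e)) u)"
      using nc_psi_del[OF e] by (simp add: mult.assoc)
    also have "\<dots> = K (fst (ends e)) * (1 - cc e) - K (snd (ends e)) * (1 - cc e)"
      by (rule demand_sum[OF fV aV bV])
    finally have "K (fst (ends e)) * (1 - cc e) - K (snd (ends e)) * (1 - cc e) = 0" using D0 by simp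
    moreover have "K (fst (ends e)) = 1" unfolding K_def C_def by simp
    ultimately have "(1 - K (snd (ends e))) * (1 - cc e) = 0" by (simp add: algebra_simps)
    then have "K (snd (ends e)) = 1" using k by simp
    then have bC: "(fst (ends e), snd (ends e)) \<in> (grel (E - {e}) ends)\<^sup>*" unfolding K_def C_def by (simp split: if_splits)
    have "grel E ends \<subseteq> (grel (E - {e}) ends)\<^sup>*"
    proof
      fix p assume p: "p \<in> grel E ends"
      have "p \<in> grel (E - {e}) ends \<or> p = (fst (ends e), snd (ends e)) \<or> p = (snd (ends e), fst (ends e))"
        using p unfolding grel_def by (auto simp: prod.swap_def)
      then show "p \<in> (grel (E - {e}) ends)\<^sup>*"
      proof (elim disjE)
        assume "p \<in> grel (E - {e}) ends" then show ?thesis by (rule r_into_rtrancl)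
      next
        assume "p = (fst (ends e), snd (ends e))" then show ?thesis using bC by simp
      next
        assume "p = (snd (ends e), fst (ends e))" then show ?thesis using grel_sym[OF bC] by simp
      qed
    qed
    then have "graph_connected V (E - {e}) ends" by (rule conn_sub[OF con])
    then show False using ncon by simp
  qed
  have h: "\<forall>u\<in>V. net_current (E - {e}) ends L (psi e) u = 0"
    using nc_psi_del[OF e] k0 by simp
  have HE: "\<forall>e'\<in>E - {e}. psi e (fst (ends e')) = psi e (snd (ends e'))"
    by (rule harmonic_edges[OF fV del_wf h])
  have two: "\<And>x. (fst (ends e), x) \<in> (grel E ends)\<^sup>* \<Longrightarrow> psi e x = psi e (fst (ends e)) \<or> psi e x = psi e (snd (ends e))"
  proof -
    fix x assume "(fst (ends e), x) \<in> (grel E ends)\<^sup>*"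
    then show "psi e x = psi e (fst (ends e)) \<or> psi e x = psi e (snd (ends e))"
    proof (induction rule: rtrancl_induct)
      case base then show ?case by simp
    next
      case (step y w)
      from step.hyps(2) obtain e'' where e'': "e'' \<in> E" "(y, w) = ends e'' \<or> (y, w) = prod.swap (ends e'')"
        unfolding grel_def by auto
      show ?case
      proof (cases "e'' = e")
        case True
        then have "w = fst (ends e) \<or> w = snd (ends e)" using e''(2) by (cases "ends e") auto
        then show ?thesis by auto
      next
        case False
        then have "e'' \<in> E - {e}" using e''(1) by simp
        then have "psi e (fst (ends e'')) = psi e (snd (ends e''))" using HE by simp
        then have "psi e w = psi e y" using e''(2) by (cases "ends e''") auto
        then show ?thesis using step.IH by simp
      qed
    qed
  qed
  have "psi e z = psi e (fst (ends e)) \<or> psi e z = psi e (snd (ends e))"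
    using two con aV zV unfolding graph_connected_grel by blast
  then have z0: "psi e (fst (ends e)) = 0 \<or> psi e (snd (ends e)) = 0" using psi_z[OF e] by simp
  have dL: "psi e (fst (ends e)) - psi e (snd (ends e)) = L e" using k0 Le unfolding cc_def by simp
  have sq: "(psi e (fst (ends e)) + psi e (snd (ends e)))\<^sup>2 = (L e)\<^sup>2"
  proof -
    have "psi e (fst (ends e)) + psi e (snd (ends e)) = L e \<or> psi e (fst (ends e)) + psi e (snd (ends e)) = - L e"
      using z0 dL by auto
    then show ?thesis by (auto simp: power2_eq_square)
  qed
  show "contr_coef V E ends L e = cc e" unfolding contr_coef_def using br k0 by simp
  show "y_term1 V E ends L e = L e * (cc e)\<^sup>2" unfolding y_term1_def using br k0 by simp
  show "y_term2 V E ends L e z = (psi e (fst (ends e)) + psi e (snd (ends e)))\<^sup>2 / L e"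
    unfolding y_term2_def using br sq Le by (simp add: power2_eq_square)
qed

lemma edge_terms:
  assumes e: "e \<in> E"
  shows "contr_coef V E ends L e = cc e"
    and "y_term1 V E ends L e = L e * (cc e)\<^sup>2"
    and "y_term2 V E ends L e z = (psi e (fst (ends e)) + psi e (snd (ends e)))\<^sup>2 / L e"
proof -
  have "contr_coef V E ends L e = cc e \<and> y_term1 V E ends L e = L e * (cc e)\<^sup>2 \<and>
    y_term2 V E ends L e z = (psi e (fst (ends e)) + psi e (snd (ends e)))\<^sup>2 / L e"
  proof (cases "fst (ends e) = snd (ends e)")
    case True
    note lc = loop_case[OF e True]
    show ?thesis using lc by simp
  next
    case False
    show ?thesis
    proof (cases "is_bridge V E ends e")
      case True
      show ?thesis using bridge_case[OF e True] by simp
    next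
      case nb: False
      show ?thesis using nonbridge_case[OF e False nb] by simp
    qed
  qed
  then show "contr_coef V E ends L e = cc e"
    and "y_term1 V E ends L e = L e * (cc e)\<^sup>2"
    and "y_term2 V E ends L e z = (psi e (fst (ends e)) + psi e (snd (ends e)))\<^sup>2 / L e" by simp_all
qed

end

lemma fst_mp: "fst (map_prod f g p) = f (fst p)" by (cases p) simp
lemma snd_mp: "snd (map_prod f g p) = g (snd p)" by (cases p) simp

lemma sum_if_delta_mult:
  fixes A :: real and B :: "'v \<Rightarrow> real"
  assumes "finite V" "x \<in> V"
  shows "(\<Sum>u\<in>V. (if P u then 1 else 0) * ((if x = u then A else 0) + B u)) =
         (if P x then A else 0) + (\<Sum>u\<in>V. (if P u then 1 else 0) * B u)"
proof -
  have "(\<Sum>u\<in>V. (if P u then 1 else 0) * ((if x = u then A else 0) + B u)) =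
     (\<Sum>u\<in>V. (if x = u then (if P u then A else 0) else 0)) + (\<Sum>u\<in>V. (if P u then 1 else 0) * B u)"
    unfolding sum.distrib[symmetric] by (rule sum.cong) (auto simp: algebra_simps)
  then show ?thesis using assms by (simp add: sum.delta)
qed


lemma energy_edges:
  assumes fV: "finite V" and fE: "finite E" and wf: "\<forall>e\<in>E. fst (ends e) \<in> V \<and> snd (ends e) \<in> V"
    and pos: "\<forall>e\<in>E. L e > 0"
    and A: "(\<Sum>u\<in>V. h u * net_current E ends L h u) = 0"
  shows "\<forall>e\<in>E. h (fst (ends e)) = h (snd (ends e))"
proof -
  define q where "q e = (h (fst (ends e)) - h (snd (ends e))) * (h (fst (ends e)) - h (snd (ends e))) / L e" for e
  have B: "(\<Sum>u\<in>V. h u * net_current E ends L h u) = (\<Sum>e\<in>E. q e)"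
    unfolding q_def by (rule nc_DI[OF fV fE wf])
  have S: "(\<Sum>e\<in>E. q e) = 0" using A B by linarith
  have N: "\<forall>e\<in>E. 0 \<le> q e"
    using pos unfolding q_def by (metis divide_nonneg_pos zero_le_square)
  have Z: "\<forall>e\<in>E. q e = 0" using sum_nonneg_eq_0_iff[OF fE, of q] S N by simp
  show ?thesis
  proof
    fix e assume e: "e \<in> E"
    have "q e = 0" using Z e by simp
    then have "h (fst (ends e)) = h (snd (ends e)) \<or> L e = 0" unfolding q_def by simp
    then show "h (fst (ends e)) = h (snd (ends e))" using pos e by force
  qed
qed

lemma sum_m_demand:
  assumes fV: "finite V" and x: "x \<in> V" and y: "y \<in> V"
  shows "(\<Sum>u\<in>V. (if m u = w then 1 else 0) * demand y x u) = demand (m y) (m x) w"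
proof -
  have "(\<Sum>u\<in>V. (if m u = w then 1 else 0) * demand y x u) =
     (\<Sum>u\<in>V. if u = x then (if m x = w then 1 else 0) else 0) - (\<Sum>u\<in>V. if u = y then (if m y = w then 1 else 0) else (0::real))"
    unfolding sum_subtractf[symmetric] demand_def by (rule sum.cong) auto
  then show ?thesis using fV x y by (simp add: sum.delta demand_def)
qed

context mgraph
begin

lemma nc_contract:
  assumes e: "e \<in> E" and w: "w \<in> W"
    and HH: "\<forall>u\<in>V. H (m u) = h u + k"
  shows "net_current (E - {e}) (\<lambda>e'. map_prod m m (ends e')) L H w =
     (\<Sum>u\<in>V. (if m u = w then 1 else 0) * net_current (E - {e}) ends L h u)"
proof -
  let ?E = "E - {e}"
  have fE': "finite ?E" using fE by simp
  have wf': "\<forall>e'\<in>?E. fst (ends e') \<in> V \<and> snd (ends e') \<in> V" using wf by auto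
  have "net_current ?E (\<lambda>e'. map_prod m m (ends e')) L H w =
    (\<Sum>e'\<in>?E. (if m (fst (ends e')) = w then (H w - H (m (snd (ends e')))) / L e' else 0)
           + (if m (snd (ends e')) = w then (H w - H (m (fst (ends e')))) / L e' else 0))"
    unfolding nc_split[OF fE'] fst_mp snd_mp by (rule refl)
  also have "\<dots> = (\<Sum>e'\<in>?E. (if m (fst (ends e')) = w then (h (fst (ends e')) - h (snd (ends e'))) / L e' else 0)
           + (if m (snd (ends e')) = w then (h (snd (ends e')) - h (fst (ends e'))) / L e' else 0))"
  proof (rule sum.cong[OF refl])
    fix e' assume e': "e' \<in> ?E"
    then have f: "fst (ends e') \<in> V" and s: "snd (ends e') \<in> V" using wf' by auto
    show "(if m (fst (ends e')) = w then (H w - H (m (snd (ends e')))) / L e' else 0)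
           + (if m (snd (ends e')) = w then (H w - H (m (fst (ends e')))) / L e' else 0) =
          (if m (fst (ends e')) = w then (h (fst (ends e')) - h (snd (ends e'))) / L e' else 0)
           + (if m (snd (ends e')) = w then (h (snd (ends e')) - h (fst (ends e'))) / L e' else 0)"
      using HH f s by (auto simp: diff_divide_distrib add_divide_distrib)
  qed
  also have "\<dots> = (\<Sum>e'\<in>?E. \<Sum>u\<in>V. (if m u = w then 1 else 0) *
      ((if fst (ends e') = u then (h u - h (snd (ends e'))) / L e' else 0)
           + (if snd (ends e') = u then (h u - h (fst (ends e'))) / L e' else 0)))"
  proof (rule sum.cong[OF refl])
    fix e' assume e': "e' \<in> ?E"
    then have f: "fst (ends e') \<in> V" and s: "snd (ends e') \<in> V" using wf' by auto
    have "(\<Sum>u\<in>V. (if m u = w then 1 else 0) *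
      ((if fst (ends e') = u then (h u - h (snd (ends e'))) / L e' else 0)
           + (if snd (ends e') = u then (h u - h (fst (ends e'))) / L e' else 0))) =
      (\<Sum>u\<in>V. (if m u = w then 1 else 0) *
      ((if fst (ends e') = u then (h (fst (ends e')) - h (snd (ends e'))) / L e' else 0)
           + (if snd (ends e') = u then (h u - h (fst (ends e'))) / L e' else 0)))"
      by (rule sum.cong) auto
    also have "\<dots> = (if m (fst (ends e')) = w then (h (fst (ends e')) - h (snd (ends e'))) / L e' else 0) +
       (\<Sum>u\<in>V. (if m u = w then 1 else 0) * (if snd (ends e') = u then (h u - h (fst (ends e'))) / L e' else 0))"
      by (rule sum_if_delta_mult[OF fV f])
    also have "(\<Sum>u\<in>V. (if m u = w then 1 else 0) * (if snd (ends e') = u then (h u - h (fst (ends e'))) / L e' else 0))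
       = (\<Sum>u\<in>V. if snd (ends e') = u then (if m (snd (ends e')) = w then (h (snd (ends e')) - h (fst (ends e'))) / L e' else 0) else 0)"
      by (rule sum.cong) auto
    also have "\<dots> = (if m (snd (ends e')) = w then (h (snd (ends e')) - h (fst (ends e'))) / L e' else 0)"
      using s fV by (simp add: sum.delta)
    finally show "(if m (fst (ends e')) = w then (h (fst (ends e')) - h (snd (ends e'))) / L e' else 0)
           + (if m (snd (ends e')) = w then (h (snd (ends e')) - h (fst (ends e'))) / L e' else 0) =
       (\<Sum>u\<in>V. (if m u = w then 1 else 0) *
      ((if fst (ends e') = u then (h u - h (snd (ends e'))) / L e' else 0)
           + (if snd (ends e') = u then (h u - h (fst (ends e'))) / L e' else 0)))" by simp
  qed
  also have "\<dots> = (\<Sum>u\<in>V. \<Sum>e'\<in>?E. (if m u = w then 1 else 0) *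
      ((if fst (ends e') = u then (h u - h (snd (ends e'))) / L e' else 0)
           + (if snd (ends e') = u then (h u - h (fst (ends e'))) / L e' else 0)))"
    by (rule sum.swap)
  also have "\<dots> = (\<Sum>u\<in>V. (if m u = w then 1 else 0) * net_current ?E ends L h u)"
    unfolding nc_split[OF fE'] sum_distrib_left by simp
  finally show ?thesis .
qed


lemma Vbar:
  assumes e: "e \<in> E" and ab: "fst (ends e) \<noteq> snd (ends e)"
  shows "contract_map ends e ` V = V - {snd (ends e)}"
proof
  show "contract_map ends e ` V \<subseteq> V - {snd (ends e)}"
    using wf e ab by (auto simp: contract_map_def)
  show "V - {snd (ends e)} \<subseteq> contract_map ends e ` V"
  proof
    fix x assume "x \<in> V - {snd (ends e)}"
    then have "x \<in> V" "contract_map ends e x = x" by (auto simp: contract_map_def)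
    then show "x \<in> contract_map ends e ` V" by (metis image_eqI)
  qed
qed

lemma contr_graph:
  assumes e: "e \<in> E" and ab: "fst (ends e) \<noteq> snd (ends e)"
  shows "finite (contract_map ends e ` V)"
    and "\<forall>e'\<in>E - {e}. fst (map_prod (contract_map ends e) (contract_map ends e) (ends e')) \<in> contract_map ends e ` V
              \<and> snd (map_prod (contract_map ends e) (contract_map ends e) (ends e')) \<in> contract_map ends e ` V"
    and "graph_connected (contract_map ends e ` V) (E - {e}) (\<lambda>e'. map_prod (contract_map ends e) (contract_map ends e) (ends e'))"
proof -
  let ?m = "contract_map ends e"
  let ?en = "\<lambda>e'. map_prod ?m ?m (ends e')"
  show "finite (?m ` V)" using fV by simp
  show "\<forall>e'\<in>E - {e}. fst (?en e') \<in> ?m ` V \<and> snd (?en e') \<in> ?m ` V"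
    using wf by (auto simp: fst_mp snd_mp)
  have main: "\<And>x y. (x, y) \<in> (grel E ends)\<^sup>* \<Longrightarrow> (?m x, ?m y) \<in> (grel (E - {e}) ?en)\<^sup>*"
  proof -
    fix x y assume "(x, y) \<in> (grel E ends)\<^sup>*"
    then show "(?m x, ?m y) \<in> (grel (E - {e}) ?en)\<^sup>*"
    proof (induction rule: rtrancl_induct)
      case base then show ?case by simp
    next
      case (step y w)
      from step.hyps(2) obtain e'' where e'': "e'' \<in> E" "(y, w) = ends e'' \<or> (y, w) = prod.swap (ends e'')"
        unfolding grel_def by auto
      show ?case
      proof (cases "e'' = e")
        case True
        have "(y = fst (ends e) \<and> w = snd (ends e)) \<or> (y = snd (ends e) \<and> w = fst (ends e))"
          using e''(2) True by (metis fst_conv snd_conv fst_swap snd_swap)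
        then have "?m w = ?m y" by (auto simp: contract_map_def)
        then show ?thesis using step.IH by simp
      next
        case False
        have en: "?en e'' = (?m (fst (ends e'')), ?m (snd (ends e'')))" by (simp add: map_prod_def case_prod_beta)
        have "(y = fst (ends e'') \<and> w = snd (ends e'')) \<or> (y = snd (ends e'') \<and> w = fst (ends e''))"
          using e''(2) by (metis fst_conv snd_conv fst_swap snd_swap)
        then have "(?m y, ?m w) = ?en e'' \<or> (?m y, ?m w) = prod.swap (?en e'')"
          unfolding en by auto
        then have "(?m y, ?m w) \<in> {?en e'', prod.swap (?en e'')}" by simp
        then have "(?m y, ?m w) \<in> grel (E - {e}) ?en"
          unfolding grel_def using e''(1) False by blast
        then show ?thesis by (rule rtrancl_into_rtrancl[OF step.IH])
      qed
    qed
  qed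
  show "graph_connected (?m ` V) (E - {e}) ?en"
    unfolding graph_connected_grel
  proof (intro ballI)
    fix x y assume x: "x \<in> ?m ` V" and y: "y \<in> ?m ` V"
    then obtain x' y' where "x' \<in> V" "y' \<in> V" "x = ?m x'" "y = ?m y'" by auto
    moreover have "(x', y') \<in> (grel E ends)\<^sup>*"
      using con \<open>x' \<in> V\<close> \<open>y' \<in> V\<close> unfolding graph_connected_grel by (simp only: Ball_def)
    ultimately show "(x, y) \<in> (grel (E - {e}) ?en)\<^sup>*" using main by simp
  qed
qed

lemma re_nonzero:
  assumes e: "e \<in> E" and ab: "fst (ends e) \<noteq> snd (ends e)"
  shows "psi e (fst (ends e)) - psi e (snd (ends e)) \<noteq> 0"
proof
  assume h0: "psi e (fst (ends e)) - psi e (snd (ends e)) = 0"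
  have aV: "fst (ends e) \<in> V" and bV: "snd (ends e) \<in> V" using wf e by auto
  have "(\<Sum>u\<in>V. psi e u * net_current E ends L (psi e) u) = (\<Sum>u\<in>V. psi e u * demand (snd (ends e)) (fst (ends e)) u)"
    using nc_psi[OF e] by simp
  also have "\<dots> = 0" using demand_sum[OF fV aV bV] h0 by simp
  finally have "\<forall>e'\<in>E. psi e (fst (ends e')) = psi e (snd (ends e'))"
    by (rule energy_edges[OF fV fE wf pos])
  then have c: "\<forall>x\<in>V. psi e x = psi e (fst (ends e))"
  proof (intro ballI)
    fix x assume x: "x \<in> V" and ed: "\<forall>e'\<in>E. psi e (fst (ends e')) = psi e (snd (ends e'))"
    have "(fst (ends e), x) \<in> (grel E ends)\<^sup>*"
      using con aV x unfolding graph_connected_grel by (simp only: Ball_def)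
    then show "psi e x = psi e (fst (ends e))" using edges_const_rtrancl[OF ed] by metis
  qed
  have "net_current E ends L (psi e) (fst (ends e)) = net_current E ends L (\<lambda>_. 0) (fst (ends e))"
    by (rule nc_cong[OF wf aV, where c = "psi e (fst (ends e))"]) (simp add: c)
  then have "demand (snd (ends e)) (fst (ends e)) (fst (ends e)) = 0" using nc_psi[OF e aV] nc_zero by simp
  then show False using ab by (simp add: demand_def)
qed


lemma rbar:
  assumes e: "e \<in> E" and ab: "fst (ends e) \<noteq> snd (ends e)" and x: "x \<in> V" and y: "y \<in> V"
  shows "eff_res (contract_map ends e ` V) (E - {e}) (\<lambda>e'. map_prod (contract_map ends e) (contract_map ends e) (ends e')) L
            (contract_map ends e x) (contract_map ends e y)
         = res x y - (psi e x - psi e y)\<^sup>2 / (psi e (fst (ends e)) - psi e (snd (ends e)))"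
proof -
  let ?m = "contract_map ends e"
  let ?en = "\<lambda>e'. map_prod ?m ?m (ends e')"
  let ?V = "?m ` V"
  let ?E = "E - {e}"
  let ?a = "fst (ends e)" and ?b = "snd (ends e)"
  have aV: "?a \<in> V" and bV: "?b \<in> V" using wf e by auto
  define re where "re = psi e ?a - psi e ?b"
  have re: "re \<noteq> 0" unfolding re_def by (rule re_nonzero[OF e ab])
  define F where "F u = g u x - g u y" for u
  define s where "s = (F ?a - F ?b) / re"
  define h where "h u = F u - s * psi e u" for u
  have Fab: "F ?a - F ?b = psi e x - psi e y"
    by (simp add: F_def psi_alt[OF e x] psi_alt[OF e y])
  have hab: "h ?a = h ?b"
  proof -
    have "h ?a - h ?b = (F ?a - F ?b) - s * re"
      by (simp add: h_def re_def algebra_simps)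
    also have "s * re = F ?a - F ?b" using re by (simp add: s_def)
    finally show ?thesis by simp
  qed
  have ncE: "\<And>u. u \<in> V \<Longrightarrow> net_current E ends L h u = demand y x u - s * demand ?b ?a u"
  proof -
    fix u assume u: "u \<in> V"
    have "net_current E ends L h u = net_current E ends L F u - s * net_current E ends L (psi e) u"
      unfolding h_def by (simp add: nc_diff[OF fE] nc_scale[OF fE])
    also have "net_current E ends L F u = demand z x u - demand z y u"
      unfolding F_def using g_char(1)[OF x] g_char(1)[OF y] u by (simp add: nc_diff[OF fE])
    also have "\<dots> = demand y x u" by (simp add: demand_def)
    finally show "net_current E ends L h u = demand y x u - s * demand ?b ?a u" using nc_psi[OF e u] by simp
  qed
  have ncE': "\<And>u. u \<in> V \<Longrightarrow> net_current ?E ends L h u = demand y x u - s * demand ?b ?a u"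
    using nc_del[OF fE e, of ends L h] ncE hab by simp
  define H where "H w = (if w \<in> ?V then h w - h y else 0)" for w
  have hm: "\<And>u. h (?m u) = h u" using hab by (simp add: contract_map_def)
  have HH: "\<forall>u\<in>V. H (?m u) = h u + (- h y)" by (simp add: H_def hm)
  have myV: "?m y \<in> ?V" using y by simp
  have volt: "voltage ?V ?E ?en L (?m y) (?m x) = H"
  proof (rule voltage_eq[OF contr_graph(1)[OF e ab] del_wf(1) contr_graph(2)[OF e ab] del_wf(3) contr_graph(3)[OF e ab] myV])
    show "\<forall>w\<in>?V. net_current ?E ?en L H w = demand (?m y) (?m x) w"
    proof
      fix w assume w: "w \<in> ?V"
      have "net_current ?E ?en L H w = (\<Sum>u\<in>V. (if ?m u = w then 1 else 0) * net_current ?E ends L h u)"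
        by (rule nc_contract[where m="?m" and H=H and h=h and k="- h y", OF e w HH])
      also have "\<dots> = (\<Sum>u\<in>V. (if ?m u = w then 1 else 0) * demand y x u) - s * (\<Sum>u\<in>V. (if ?m u = w then 1 else 0) * demand ?b ?a u)"
        by (simp add: ncE' sum_distrib_left sum_subtractf[symmetric] algebra_simps)
      also have "\<dots> = demand (?m y) (?m x) w - s * demand (?m ?b) (?m ?a) w"
        using sum_m_demand[where m="?m" and w=w, OF fV x y] sum_m_demand[where m="?m" and w=w, OF fV aV bV] by simp
      also have "demand (?m ?b) (?m ?a) w = 0" by (simp add: demand_def contract_map_def)
      finally show "net_current ?E ?en L H w = demand (?m y) (?m x) w" by simp
    qed
    show "H (?m y) = 0" using myV hm by (simp add: H_def)
    show "\<forall>u. u \<notin> ?V \<longrightarrow> H u = 0" by (simp add: H_def)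
  qed
  have "eff_res ?V ?E ?en L (?m x) (?m y) = h x - h y"
    unfolding eff_res_def volt using x by (simp add: H_def hm)
  also have "\<dots> = (F x - F y) - s * (psi e x - psi e y)" by (simp add: h_def algebra_simps)
  also have "F x - F y = res x y" unfolding F_def res_def using g_sym[OF x y] by simp
  also have "s * (psi e x - psi e y) = (psi e x - psi e y)\<^sup>2 / re"
    unfolding s_def Fab by (simp add: power2_eq_square)
  finally show ?thesis unfolding re_def .
qed


definition rb :: "'e \<Rightarrow> 'v \<Rightarrow> 'v \<Rightarrow> real" where
  "rb e x y = res x y - (psi e x - psi e y)\<^sup>2 / (psi e (fst (ends e)) - psi e (snd (ends e)))"

lemma kf_contr:
  assumes e: "e \<in> E" and ab: "fst (ends e) \<noteq> snd (ends e)"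
  shows "kf_contracted V E ends L e = (1/2) * (\<Sum>x\<in>V. \<Sum>y\<in>V. rb e x y) - (\<Sum>x\<in>V. rb e x (fst (ends e)))"
proof -
  let ?m = "contract_map ends e"
  let ?en = "\<lambda>e'. map_prod ?m ?m (ends e')"
  let ?a = "fst (ends e)" and ?b = "snd (ends e)"
  let ?R = "eff_res (?m ` V) (E - {e}) ?en L"
  have aV: "?a \<in> V" and bV: "?b \<in> V" using wf e by auto
  have RB: "\<And>x y. x \<in> V \<Longrightarrow> y \<in> V \<Longrightarrow> ?R (?m x) (?m y) = rb e x y"
    unfolding rb_def by (rule rbar[OF e ab])
  have mab: "?m ?a = ?m ?b" by (simp add: contract_map_def)
  have rbb: "\<And>x. x \<in> V \<Longrightarrow> rb e x ?b = rb e x ?a" using RB aV bV mab by metis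
  have rbs: "\<And>x y. x \<in> V \<Longrightarrow> y \<in> V \<Longrightarrow> rb e x y = rb e y x"
    unfolding rb_def using res_sym by (simp add: power2_commute)
  have raa: "rb e ?a ?a = 0" unfolding rb_def res_def by simp
  have fV': "finite (V - {?b})" using fV by simp
  have "kf_contracted V E ends L e = (1/2) * (\<Sum>x\<in>V - {?b}. \<Sum>y\<in>V - {?b}. ?R x y)"
    unfolding kf_contracted_def kirchhoff_index_def Vbar[OF e ab] by simp
  also have "(\<Sum>x\<in>V - {?b}. \<Sum>y\<in>V - {?b}. ?R x y) = (\<Sum>x\<in>V - {?b}. \<Sum>y\<in>V - {?b}. rb e x y)"
  proof (intro sum.cong refl)
    fix x y assume x: "x \<in> V - {?b}" and y: "y \<in> V - {?b}"
    then have "?m x = x" "?m y = y" by (auto simp: contract_map_def)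
    then show "?R x y = rb e x y" using RB[of x y] x y by simp
  qed
  finally have K: "kf_contracted V E ends L e = (1/2) * (\<Sum>x\<in>V - {?b}. \<Sum>y\<in>V - {?b}. rb e x y)" .
  have Q1: "(\<Sum>x\<in>V. \<Sum>y\<in>V. rb e x y) = (\<Sum>x\<in>V. \<Sum>y\<in>V - {?b}. rb e x y) + (\<Sum>x\<in>V. rb e x ?a)"
  proof -
    have "(\<Sum>x\<in>V. \<Sum>y\<in>V. rb e x y) = (\<Sum>x\<in>V. rb e x ?b + (\<Sum>y\<in>V - {?b}. rb e x y))"
      by (rule sum.cong[OF refl]) (rule sum.remove[OF fV bV])
    also have "\<dots> = (\<Sum>x\<in>V. rb e x ?a + (\<Sum>y\<in>V - {?b}. rb e x y))"
      by (rule sum.cong[OF refl]) (simp add: rbb)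
    finally show ?thesis by (simp add: sum.distrib)
  qed
  have Q2: "(\<Sum>x\<in>V. \<Sum>y\<in>V - {?b}. rb e x y) = (\<Sum>x\<in>V - {?b}. \<Sum>y\<in>V - {?b}. rb e x y) + (\<Sum>y\<in>V - {?b}. rb e ?b y)"
    using sum.remove[OF fV bV, of "\<lambda>x. \<Sum>y\<in>V - {?b}. rb e x y"] by simp
  have Q3: "(\<Sum>y\<in>V - {?b}. rb e ?b y) = (\<Sum>x\<in>V. rb e x ?a)"
  proof -
    have "(\<Sum>y\<in>V - {?b}. rb e ?b y) = (\<Sum>y\<in>V - {?b}. rb e y ?a)"
      by (rule sum.cong[OF refl]) (simp add: rbs bV rbb)
    also have "\<dots> = (\<Sum>x\<in>V. rb e x ?a) - rb e ?b ?a"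
      using sum.remove[OF fV bV, of "\<lambda>x. rb e x ?a"] by simp
    also have "rb e ?b ?a = 0" using rbs[OF bV aV] rbb[OF aV] raa by simp
    finally show ?thesis by simp
  qed
  show ?thesis using K Q1 Q2 Q3 by linarith
qed

lemma edge_contr:
  assumes e: "e \<in> E"
  shows "contr_coef V E ends L e * kf_contracted V E ends L e =
    cc e * ((1/2) * (\<Sum>x\<in>V. \<Sum>y\<in>V. res x y)) - cc e * (\<Sum>x\<in>V. res x (fst (ends e)))
    - (1/2) * (\<Sum>x\<in>V. \<Sum>y\<in>V. (psi e x - psi e y)\<^sup>2 / L e) + (\<Sum>x\<in>V. (psi e x - psi e (fst (ends e)))\<^sup>2 / L e)"
proof (cases "fst (ends e) = snd (ends e)")
  case True
  note lc = loop_case[OF e True]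
  show ?thesis using lc by simp
next
  case ab: False
  have Le: "L e > 0" using pos e by auto
  have re: "psi e (fst (ends e)) - psi e (snd (ends e)) \<noteq> 0" by (rule re_nonzero[OF e ab])
  have cr: "\<And>x y. cc e * rb e x y = cc e * res x y - (psi e x - psi e y)\<^sup>2 / L e"
    unfolding rb_def cc_def using re Le by (simp add: field_simps)
  have "contr_coef V E ends L e * kf_contracted V E ends L e =
     (1/2) * (\<Sum>x\<in>V. \<Sum>y\<in>V. cc e * rb e x y) - (\<Sum>x\<in>V. cc e * rb e x (fst (ends e)))"
    unfolding edge_terms(1)[OF e] kf_contr[OF e ab] by (simp add: sum_distrib_left algebra_simps)
  also have "\<dots> = (1/2) * (\<Sum>x\<in>V. \<Sum>y\<in>V. cc e * res x y - (psi e x - psi e y)\<^sup>2 / L e)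
       - (\<Sum>x\<in>V. cc e * res x (fst (ends e)) - (psi e x - psi e (fst (ends e)))\<^sup>2 / L e)"
    by (simp only: cr)
  also have "\<dots> = cc e * ((1/2) * (\<Sum>x\<in>V. \<Sum>y\<in>V. res x y)) - cc e * (\<Sum>x\<in>V. res x (fst (ends e)))
    - (1/2) * (\<Sum>x\<in>V. \<Sum>y\<in>V. (psi e x - psi e y)\<^sup>2 / L e) + (\<Sum>x\<in>V. (psi e x - psi e (fst (ends e)))\<^sup>2 / L e)"
    by (simp add: sum_subtractf sum_distrib_left algebra_simps)
  finally show ?thesis .
qed

end

lemma alg_final:
  fixes A B C sa sb T v M :: real
  assumes M: "M > 0"
  shows "- ((A - C - (C - B)) / M) * (T + v * A - 2 * sa) - 2 * (A - C) * (sa - sb) / M + v * (A - C)\<^sup>2 / M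
     - v * ((1/4) * (M * ((A - C - (C - B)) / M)\<^sup>2) + (3/4) * ((A - C + (C - B))\<^sup>2 / M))
     = - ((A - C - (C - B)) / M) * T - v * ((A * (A - C) + B * (B - C)) / M)
       + 2 * ((sa * (A - C) + sb * (B - C)) / M) - 2 * ((A - B) * (sa - sb) / M)"
  using M by (simp add: field_simps power2_eq_square)

context mgraph
begin

definition K0 :: real where "K0 = (1/2) * (\<Sum>x\<in>V. \<Sum>y\<in>V. res x y)"

lemma K0_TS: "K0 = real (card V) * T - S"
proof -
  have "(\<Sum>x\<in>V. \<Sum>y\<in>V. res x y) = (\<Sum>x\<in>V. \<Sum>y\<in>V. g x x) + (\<Sum>x\<in>V. \<Sum>y\<in>V. g y y) - 2 * (\<Sum>x\<in>V. \<Sum>y\<in>V. g x y)"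
    unfolding res_def by (simp add: sum.distrib sum_subtractf sum_distrib_left)
  also have "\<dots> = real (card V) * T + real (card V) * T - 2 * S"
    unfolding T_def S_def sig_def by (simp add: sum_distrib_left)
  finally show ?thesis unfolding K0_def by simp
qed

lemma kf_K0: "kirchhoff_index V E ends L = K0"
  unfolding kirchhoff_index_def K0_def using eff_res_g by (simp cong: sum.cong)

lemma sum_res_a:
  assumes aV: "a \<in> V"
  shows "(\<Sum>x\<in>V. res x a) = T + real (card V) * g a a - 2 * sig a"
proof -
  have "(\<Sum>x\<in>V. res x a) = (\<Sum>x\<in>V. g x x + g a a - 2 * g a x)"
    unfolding res_def using g_sym aV by (intro sum.cong) auto
  then show ?thesis unfolding T_def sig_def by (simp add: sum.distrib sum_subtractf sum_distrib_left)
qed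

lemma sum_psi:
  assumes e: "e \<in> E"
  shows "(\<Sum>x\<in>V. psi e x) = sig (fst (ends e)) - sig (snd (ends e))"
  unfolding sig_def using psi_alt[OF e] by (simp add: sum_subtractf cong: sum.cong)

lemma sum_psi_sq:
  assumes e: "e \<in> E"
  shows "(\<Sum>x\<in>V. (psi e x - psi e (fst (ends e)))\<^sup>2 / L e) =
    (\<Sum>x\<in>V. psi e x * psi e x / L e) - 2 * psi e (fst (ends e)) * (sig (fst (ends e)) - sig (snd (ends e))) / L e
    + real (card V) * (psi e (fst (ends e)))\<^sup>2 / L e"
proof -
  have "(\<Sum>x\<in>V. (psi e x - psi e (fst (ends e)))\<^sup>2 / L e) =
    (\<Sum>x\<in>V. psi e x * psi e x / L e - (2 * psi e (fst (ends e)) / L e) * psi e x + (psi e (fst (ends e)))\<^sup>2 / L e)"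
    using pos e by (intro sum.cong) (auto simp: power2_eq_square field_simps)
  also have "\<dots> = (\<Sum>x\<in>V. psi e x * psi e x / L e) - (2 * psi e (fst (ends e)) / L e) * (\<Sum>x\<in>V. psi e x)
     + real (card V) * (psi e (fst (ends e)))\<^sup>2 / L e"
    by (simp add: sum.distrib sum_subtractf sum_distrib_left)
  finally show ?thesis using sum_psi[OF e] by simp
qed

definition W3 :: "'e \<Rightarrow> real" where
  "W3 e = (g (fst (ends e)) (fst (ends e)) * (g (fst (ends e)) (fst (ends e)) - g (fst (ends e)) (snd (ends e)))
     + g (snd (ends e)) (snd (ends e)) * (g (snd (ends e)) (snd (ends e)) - g (fst (ends e)) (snd (ends e)))) / L e"
definition W4 :: "'e \<Rightarrow> real" where
  "W4 e = (g (fst (ends e)) (fst (ends e)) - g (snd (ends e)) (snd (ends e))) * (sig (fst (ends e)) - sig (snd (ends e))) / L e"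
definition W5 :: "'e \<Rightarrow> real" where
  "W5 e = (sig (fst (ends e)) * (g (fst (ends e)) (fst (ends e)) - g (fst (ends e)) (snd (ends e)))
     + sig (snd (ends e)) * (g (snd (ends e)) (snd (ends e)) - g (fst (ends e)) (snd (ends e)))) / L e"

lemma edge_total:
  assumes e: "e \<in> E"
  shows "contr_coef V E ends L e * kf_contracted V E ends L e
      - real (card V) * ((1/4) * y_term1 V E ends L e + (3/4) * y_term2 V E ends L e z)
    = cc e * K0 - (1/2) * (\<Sum>x\<in>V. \<Sum>y\<in>V. (psi e x - psi e y)\<^sup>2 / L e) + (\<Sum>x\<in>V. psi e x * psi e x / L e)
      + (- cc e * T - real (card V) * W3 e + 2 * W5 e - 2 * W4 e)"
proof -
  let ?a = "fst (ends e)" and ?b = "snd (ends e)"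
  have aV: "?a \<in> V" and bV: "?b \<in> V" using wf e by auto
  have Le: "L e > 0" using pos e by auto
  have pa: "psi e ?a = g ?a ?a - g ?a ?b" unfolding psi_def by simp
  have pb: "psi e ?b = g ?a ?b - g ?b ?b" unfolding psi_def using g_sym[OF aV bV] by simp
  have ccv: "cc e = (psi e ?a - psi e ?b) / L e" unfolding cc_def by simp
  have "contr_coef V E ends L e * kf_contracted V E ends L e
      - real (card V) * ((1/4) * y_term1 V E ends L e + (3/4) * y_term2 V E ends L e z)
    = cc e * K0 - (1/2) * (\<Sum>x\<in>V. \<Sum>y\<in>V. (psi e x - psi e y)\<^sup>2 / L e) + (\<Sum>x\<in>V. psi e x * psi e x / L e)
      + (- cc e * (T + real (card V) * g ?a ?a - 2 * sig ?a) - 2 * psi e ?a * (sig ?a - sig ?b) / L e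
         + real (card V) * (psi e ?a)\<^sup>2 / L e
         - real (card V) * ((1/4) * (L e * (cc e)\<^sup>2) + (3/4) * ((psi e ?a + psi e ?b)\<^sup>2 / L e)))"
    unfolding edge_contr[OF e] edge_terms(2)[OF e] edge_terms(3)[OF e] sum_psi_sq[OF e] sum_res_a[OF aV] K0_def
    by (simp add: algebra_simps)
  also have "- cc e * (T + real (card V) * g ?a ?a - 2 * sig ?a) - 2 * psi e ?a * (sig ?a - sig ?b) / L e
         + real (card V) * (psi e ?a)\<^sup>2 / L e
         - real (card V) * ((1/4) * (L e * (cc e)\<^sup>2) + (3/4) * ((psi e ?a + psi e ?b)\<^sup>2 / L e))
      = - cc e * T - real (card V) * W3 e + 2 * W5 e - 2 * W4 e"
    unfolding ccv pa pb W3_def W4_def W5_def by (rule alg_final[OF Le])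
  finally show ?thesis .
qed


lemma P2: "(\<Sum>e\<in>E. (1/2) * (\<Sum>x\<in>V. \<Sum>y\<in>V. (psi e x - psi e y)\<^sup>2 / L e)) = K0"
proof -
  have "(\<Sum>e\<in>E. \<Sum>x\<in>V. \<Sum>y\<in>V. (psi e x - psi e y)\<^sup>2 / L e) = (\<Sum>x\<in>V. \<Sum>e\<in>E. \<Sum>y\<in>V. (psi e x - psi e y)\<^sup>2 / L e)"
    by (rule sum.swap)
  also have "\<dots> = (\<Sum>x\<in>V. \<Sum>y\<in>V. \<Sum>e\<in>E. (psi e x - psi e y)\<^sup>2 / L e)"
    by (rule sum.cong[OF refl]) (rule sum.swap)
  also have "\<dots> = (\<Sum>x\<in>V. \<Sum>y\<in>V. res x y)"
  proof (intro sum.cong refl)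
    fix x y assume x: "x \<in> V" and y: "y \<in> V"
    have "(\<Sum>e\<in>E. (psi e x - psi e y)\<^sup>2 / L e) = (\<Sum>e\<in>E. psi e x * psi e x / L e) + (\<Sum>e\<in>E. psi e y * psi e y / L e) - 2 * (\<Sum>e\<in>E. psi e x * psi e y / L e)"
      by (simp add: sum.distrib sum_subtractf sum_distrib_left power2_eq_square diff_divide_distrib add_divide_distrib algebra_simps)
    also have "\<dots> = res x y" unfolding F2[OF x x] F2[OF y y] F2[OF x y] res_def by simp
    finally show "(\<Sum>e\<in>E. (psi e x - psi e y)\<^sup>2 / L e) = res x y" .
  qed
  finally have X: "(\<Sum>e\<in>E. \<Sum>x\<in>V. \<Sum>y\<in>V. (psi e x - psi e y)\<^sup>2 / L e) = (\<Sum>x\<in>V. \<Sum>y\<in>V. res x y)" .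
  have "(\<Sum>e\<in>E. (1/2) * (\<Sum>x\<in>V. \<Sum>y\<in>V. (psi e x - psi e y)\<^sup>2 / L e)) = (1/2) * (\<Sum>e\<in>E. \<Sum>x\<in>V. \<Sum>y\<in>V. (psi e x - psi e y)\<^sup>2 / L e)"
    by (rule sum_distrib_left[symmetric])
  then show ?thesis unfolding K0_def X .
qed

lemma P3: "(\<Sum>e\<in>E. \<Sum>x\<in>V. psi e x * psi e x / L e) = T"
proof -
  have "(\<Sum>e\<in>E. \<Sum>x\<in>V. psi e x * psi e x / L e) = (\<Sum>x\<in>V. \<Sum>e\<in>E. psi e x * psi e x / L e)"
    by (rule sum.swap)
  also have "\<dots> = (\<Sum>x\<in>V. g x x)" by (rule sum.cong[OF refl]) (rule F2)
  finally show ?thesis unfolding T_def .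
qed

lemma main_loc:
  "(real (card V) - 4) * kirchhoff_index V E ends L =
     (\<Sum>i\<in>E. contr_coef V E ends L i * kf_contracted V E ends L i)
     - real (card V) * y_inv V E ends L z"
proof -
  let ?v = "real (card V)"
  have "(\<Sum>i\<in>E. contr_coef V E ends L i * kf_contracted V E ends L i) - ?v * y_inv V E ends L z
     = (\<Sum>e\<in>E. contr_coef V E ends L e * kf_contracted V E ends L e
      - ?v * ((1/4) * y_term1 V E ends L e + (3/4) * y_term2 V E ends L e z))"
    unfolding y_inv_def by (simp add: sum_subtractf sum.distrib sum_distrib_left algebra_simps)
  also have "\<dots> = (\<Sum>e\<in>E. cc e * K0 - (1/2) * (\<Sum>x\<in>V. \<Sum>y\<in>V. (psi e x - psi e y)\<^sup>2 / L e) + (\<Sum>x\<in>V. psi e x * psi e x / L e)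
      + (- cc e * T - ?v * W3 e + 2 * W5 e - 2 * W4 e))"
    by (rule sum.cong[OF refl]) (rule edge_total)
  also have "\<dots> = (\<Sum>e\<in>E. cc e) * K0 - (\<Sum>e\<in>E. (1/2) * (\<Sum>x\<in>V. \<Sum>y\<in>V. (psi e x - psi e y)\<^sup>2 / L e))
      + (\<Sum>e\<in>E. \<Sum>x\<in>V. psi e x * psi e x / L e)
      - (\<Sum>e\<in>E. cc e) * T - ?v * (\<Sum>e\<in>E. W3 e) + 2 * (\<Sum>e\<in>E. W5 e) - 2 * (\<Sum>e\<in>E. W4 e)"
    by (simp add: sum.distrib sum_subtractf sum_distrib_left sum_distrib_right algebra_simps)
  also have "(\<Sum>e\<in>E. cc e) = ?v - 1" unfolding cc_def by (rule F1)
  also have "(\<Sum>e\<in>E. W3 e) = T" unfolding W3_def by (rule F3)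
  also have "(\<Sum>e\<in>E. W4 e) = T" unfolding W4_def by (rule F4)
  also have "(\<Sum>e\<in>E. W5 e) = S" unfolding W5_def by (rule F5)
  finally have "(\<Sum>i\<in>E. contr_coef V E ends L i * kf_contracted V E ends L i) - ?v * y_inv V E ends L z
     = (?v - 1) * K0 - K0 + T - (?v - 1) * T - ?v * T + 2 * S - 2 * T"
    unfolding P2 P3 by simp
  also have "\<dots> = (?v - 4) * K0" unfolding K0_TS by (simp add: algebra_simps)
  finally show ?thesis unfolding kf_K0 by simp
qed

end

theorem theorem3p5:
  fixes V :: "'v set" and E :: "'e set" and ends :: "'e \<Rightarrow> 'v \<times> 'v"
    and L :: "'e \<Rightarrow> real" and p :: 'v
  assumes "metrized_graph V E ends L"
    and "card V \<ge> 4"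
    and "p \<in> V"
  shows "(real (card V) - 4) * kirchhoff_index V E ends L =
         (\<Sum>i\<in>E. contr_coef V E ends L i * kf_contracted V E ends L i)
         - real (card V) * y_inv V E ends L p"
proof -
  interpret mgraph V E ends L p
    using assms(1,3) unfolding metrized_graph_def by unfold_locales auto
  show ?thesis by (rule main_loc)
qed

end
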